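(* Let $[x,y]$ be a fixed segment. Any finite union, and any (arbitrary) intersection, of slender adornments with base $[x,y]$ is again a slender adornment with base $[x,y]$.
   Context: An adornment is a compact simply connected region $S\subset\mathbb{R}^2$ together with a segment $[x,y]$, $x\neq y$, whose endpoints lie on the boundary of $S$ and with $[x,y]\subseteq S$ (the base). The boundary of $S$ consists of two arcs from $x$ to $y$ (the sides). The adornment is slender if, for a point $p$ moving along either side from $x$ to $y$, $\|p-x\|$ is nondecreasing and $\|p-y\|$ is nonincreasing. *)

theory Defs
  imports "HOL-Analysis.Analysis"
begin

definition adornment_sides :: "(real^2) set \<Rightarrow> real^2 \<Rightarrow> real^2 \<Rightarrow>
    (real \<Rightarrow> real^2) \<Rightarrow> (real \<Rightarrow> real^2) \<Rightarrow> bool" where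
  "adornment_sides S x y g1 g2 \<longleftrightarrow>
     compact S \<and> simply_connected S \<and> x \<noteq> y \<and>
     x \<in> frontier S \<and> y \<in> frontier S \<and> closed_segment x y \<subseteq> S \<and>
     arc g1 \<and> pathstart g1 = x \<and> pathfinish g1 = y \<and>
     arc g2 \<and> pathstart g2 = x \<and> pathfinish g2 = y \<and>
     frontier S = path_image g1 \<union> path_image g2"

definition adornment :: "(real^2) set \<Rightarrow> real^2 \<Rightarrow> real^2 \<Rightarrow> bool" where
  "adornment S x y \<longleftrightarrow> (\<exists>g1 g2. adornment_sides S x y g1 g2)"

definition slender_side :: "(real \<Rightarrow> real^2) \<Rightarrow> real^2 \<Rightarrow> real^2 \<Rightarrow> bool" where
  "slender_side g x y \<longleftrightarrow>
     (\<forall>s\<in>{0..1}. \<forall>t\<in>{0..1}. s \<le> t \<longrightarrow>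
        dist (g s) x \<le> dist (g t) x \<and> dist (g t) y \<le> dist (g s) y)"

definition slender_adornment :: "(real^2) set \<Rightarrow> real^2 \<Rightarrow> real^2 \<Rightarrow> bool" where
  "slender_adornment S x y \<longleftrightarrow>
     (\<exists>g1 g2. adornment_sides S x y g1 g2 \<and> slender_side g1 x y \<and> slender_side g2 x y)"

end

theory Submission
  imports Defs "HOL-Complex_Analysis.Complex_Analysis"
begin

definition j2c :: "real^2 \<Rightarrow> complex" where "j2c q = Complex (q$1) (q$2)"
definition c2j :: "complex \<Rightarrow> real^2" where "c2j z = vector [Re z, Im z]"

lemma j2c_c2j [simp]: "j2c (c2j z) = z" by (simp add: j2c_def c2j_def complex_eq_iff)
lemma c2j_j2c [simp]: "c2j (j2c q) = q"
  by (simp add: j2c_def c2j_def vec_eq_iff forall_2)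

lemma linear_j2c: "linear j2c"
  by (rule linearI) (simp_all add: j2c_def complex_eq_iff)
lemma linear_c2j: "linear c2j"
  by (rule linearI) (simp_all add: c2j_def vec_eq_iff forall_2)
lemma inj_j2c: "inj j2c" by (metis c2j_j2c injI)
lemma bl_j2c: "bounded_linear j2c" using linear_j2c linear_conv_bounded_linear by blast
lemma bl_c2j: "bounded_linear c2j" using linear_c2j linear_conv_bounded_linear by blast

lemma inside_loop_in_S:
  fixes S B :: "(real^2) set" and \<gamma> :: "real \<Rightarrow> real^2"
  assumes sc: "simply_connected S" and sp: "simple_path \<gamma>" and cl: "pathfinish \<gamma> = pathstart \<gamma>"
    and sub: "path_image \<gamma> \<subseteq> S" and bB: "bounded B" and fr: "frontier B \<subseteq> path_image \<gamma>"
    and pB: "p \<in> B" and pn: "p \<notin> path_image \<gamma>"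
  shows "p \<in> S"
proof (rule ccontr)
  assume pS: "p \<notin> S"
  define S' where "S' = j2c ` S"
  define g where "g = j2c \<circ> \<gamma>"
  have hom: "homeomorphism S S' j2c c2j"
    unfolding homeomorphism_def S'_def
    by (auto simp: linear_continuous_on[OF bl_j2c] linear_continuous_on[OF bl_c2j] image_iff)
  then have "S homeomorphic S'" unfolding homeomorphic_def by blast
  then have sc': "simply_connected S'" using sc homeomorphic_simply_connected by blast
  have spg: "simple_path g" unfolding g_def using simple_path_linear_image_eq[OF linear_j2c inj_j2c] sp by simp
  have pig: "path_image g = j2c ` path_image \<gamma>" unfolding g_def by (rule path_image_compose)
  have clg: "pathfinish g = pathstart g" using cl by (simp add: g_def pathfinish_def pathstart_def)
  have subg: "path_image g \<subseteq> S'" unfolding pig S'_def using sub by blast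
  have pS': "j2c p \<notin> S'" unfolding S'_def using pS by (metis c2j_j2c image_iff)
  have "winding_number g (j2c p) = 0"
    by (rule simply_connected_imp_winding_number_zero[OF sc' simple_path_imp_path[OF spg] subg clg pS'])
  then have ni: "j2c p \<notin> inside (path_image g)"
    using simple_closed_path_norm_winding_number_inside[OF spg] by fastforce
  have np: "j2c p \<notin> path_image g" unfolding pig using pn by (metis c2j_j2c image_iff)
  have po: "j2c p \<in> outside (path_image g)"
    using ni np inside_Un_outside[of "path_image g"] by blast
  have bg: "bounded (path_image g)" using spg by (simp add: bounded_simple_path_image)
  define Ou where "Ou = outside (path_image g)"
  define K where "K = c2j ` Ou"
  have cK: "connected K" unfolding K_def Ou_def
    by (intro connected_continuous_image linear_continuous_on[OF bl_c2j] connected_outside bg) simp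
  have uK: "\<not> bounded K"
  proof
    assume "bounded K"
    then have "bounded (j2c ` K)" by (rule bounded_linear_image[OF _ bl_j2c])
    moreover have "j2c ` K = Ou" unfolding K_def by (simp add: image_image)
    ultimately show False using unbounded_outside[OF bg] by (simp add: Ou_def)
  qed
  have pK: "p \<in> K" unfolding K_def Ou_def using po by (metis c2j_j2c image_iff)
  have dK: "K \<inter> path_image \<gamma> = {}"
  proof -
    { fix q assume "q \<in> K" "q \<in> path_image \<gamma>"
      then have "j2c q \<in> Ou" "j2c q \<in> path_image g" unfolding K_def pig by auto
      then have False using outside_no_overlap[of "path_image g"] unfolding Ou_def by blast }
    then show ?thesis by blast
  qed
  have "K - B \<noteq> {}" using uK bB bounded_subset by blast
  moreover have "K \<inter> B \<noteq> {}" using pK pB by blast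
  ultimately have "K \<inter> frontier B \<noteq> {}" using connected_Int_frontier[OF cK] by blast
  then show False using dK fr by blast
qed

lemma norm2_sq: "(norm (w::real^2))^2 = (w$1)^2 + (w$2)^2"
  by (simp add: norm_vec_def L2_set_def sum_2)

lemma sq_div_add: "((A::real)/d)^2 + (B/d)^2 = (A^2+B^2)/d^2"
  by (simp add: power_divide add_divide_distrib)

locale bip =
  fixes x y :: "real^2"
  assumes xy: "x \<noteq> y"
begin

definition "d = dist x y"
definition "c1 = (y-x)$1"
definition "c2 = (y-x)$2"
definition "ca p = ((p-x)$1*c1 + (p-x)$2*c2)/d"
definition "cb p = ((p-x)$2*c1 - (p-x)$1*c2)/d"
definition "pt A B = x + (A/d) *\<^sub>R (y-x) + (B/d) *\<^sub>R (vector[-c2, c1])"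

lemma d_pos: "d > 0" using xy by (simp add: d_def)
lemma d_sq: "d^2 = c1^2 + c2^2"
proof -
  have "d^2 = (norm (y-x))^2" by (simp add: d_def dist_norm norm_minus_commute)
  then show ?thesis by (simp add: norm2_sq c1_def c2_def)
qed

lemma dd: "c1*c1 + c2*c2 = d*d" using d_sq by (simp add: power2_eq_square)

lemma dd2: "c1^2 + c2^2 = d*d" using d_sq by (simp add: power2_eq_square)

lemma dist_x_sq: "(dist p x)^2 = (ca p)^2 + (cb p)^2"
proof -
  define w1 where "w1 = (p-x)$1"
  define w2 where "w2 = (p-x)$2"
  have 1: "(dist p x)^2 = w1^2 + w2^2" by (simp add: dist_norm norm2_sq w1_def w2_def)
  have 2: "(ca p)^2 + (cb p)^2 = ((w1*c1 + w2*c2)^2 + (w2*c1 - w1*c2)^2)/d^2"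
    unfolding ca_def cb_def w1_def[symmetric] w2_def[symmetric] by (rule sq_div_add)
  have 3: "(w1*c1 + w2*c2)^2 + (w2*c1 - w1*c2)^2 = (w1^2 + w2^2) * d^2"
    unfolding d_sq by algebra
  show ?thesis using 1 2 3 d_pos by simp
qed

lemma dist_y_sq: "(dist p y)^2 = (ca p - d)^2 + (cb p)^2"
proof -
  define w1 where "w1 = (p-x)$1"
  define w2 where "w2 = (p-x)$2"
  have 1: "(dist p y)^2 = (w1-c1)^2 + (w2-c2)^2"
  proof -
    have "p - y = (p - x) - (y - x)" by simp
    then show ?thesis by (simp only: dist_norm norm2_sq w1_def w2_def c1_def c2_def vector_minus_component)
  qed
  have e: "ca p - d = (w1*c1 + w2*c2 - d^2)/d"
    unfolding ca_def w1_def[symmetric] w2_def[symmetric] using d_pos by (simp add: field_simps power2_eq_square)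
  have 2: "(ca p - d)^2 + (cb p)^2 = ((w1*c1 + w2*c2 - d^2)^2 + (w2*c1 - w1*c2)^2)/d^2"
    unfolding e cb_def w1_def[symmetric] w2_def[symmetric] by (rule sq_div_add)
  have 3: "(w1*c1 + w2*c2 - d^2)^2 + (w2*c1 - w1*c2)^2 = ((w1-c1)^2 + (w2-c2)^2) * d^2"
    unfolding d_sq by algebra
  show ?thesis using 1 2 3 d_pos by simp
qed

lemma pt_comp: "(pt A B - x)$1 = (A/d)*c1 - (B/d)*c2" "(pt A B - x)$2 = (A/d)*c2 + (B/d)*c1"
  using d_pos by (simp_all add: pt_def c1_def c2_def field_simps)

lemma ca_pt: "ca (pt A B) = A"
proof -
  have e: "((A/d*c1 - B/d*c2)*c1 + (A/d*c2 + B/d*c1)*c2) = (A/d)*(c1*c1+c2*c2)" by algebra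
  show ?thesis unfolding ca_def pt_comp e dd using d_pos by simp
qed
lemma cb_pt: "cb (pt A B) = B"
proof -
  have e: "((A/d*c2 + B/d*c1)*c1 - (A/d*c1 - B/d*c2)*c2) = (B/d)*(c1*c1+c2*c2)" by algebra
  show ?thesis unfolding cb_def pt_comp e dd using d_pos by simp
qed
lemma pt_ca_cb: "pt (ca p) (cb p) = p"
proof -
  define w1 where "w1 = (p-x)$1"
  define w2 where "w2 = (p-x)$2"
  have e1: "(pt (ca p) (cb p) - x)$1 = w1" 
  proof -
    have e: "((w1*c1+w2*c2)/d/d)*c1 - ((w2*c1-w1*c2)/d/d)*c2 = w1*(c1*c1+c2*c2)/d/d" by algebra
    show ?thesis unfolding pt_comp ca_def cb_def w1_def[symmetric] w2_def[symmetric] e dd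
      using d_pos by simp
  qed
  have e2: "(pt (ca p) (cb p) - x)$2 = w2" 
  proof -
    have e: "((w1*c1+w2*c2)/d/d)*c2 + ((w2*c1-w1*c2)/d/d)*c1 = w2*(c1*c1+c2*c2)/d/d" by algebra
    show ?thesis unfolding pt_comp ca_def cb_def w1_def[symmetric] w2_def[symmetric] e dd
      using d_pos by simp
  qed
  have "pt (ca p) (cb p) - x = p - x"
    unfolding vec_eq_iff forall_2 using e1 e2 unfolding w1_def w2_def by simp
  then show ?thesis by simp
qed

end

context bip begin

definition "vv p = dist p x - dist p y"
definition "uu p = dist p x + dist p y"
definition "hh p = sgn (cb p) * (uu p - d)"
definition "Phi v h = pt (((d+(abs h))* v + d^2)/(2*d)) (sqrt(h*((abs h)+2*d)) * sqrt(d^2-v^2)/(2*d))"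
definition "lens = cball x d \<inter> cball y d"

lemma uu_ge: "uu p \<ge> d"
  unfolding uu_def d_def by (metis dist_commute dist_triangle)
lemma vv_le: "\<bar>vv p\<bar> \<le> d"
proof -
  have "dist p x \<le> dist p y + dist y x" by (rule dist_triangle)
  moreover have "dist p y \<le> dist p x + dist x y" by (rule dist_triangle)
  ultimately show ?thesis unfolding vv_def d_def by (simp add: dist_commute)
qed

lemma sq_le_d: "\<bar>v\<bar> \<le> d \<Longrightarrow> v^2 \<le> d^2"
  using power_mono[of "\<bar>v\<bar>" d 2] by simp
lemma sq_less_d: "\<bar>v\<bar> < d \<Longrightarrow> v^2 < d^2"
  using power_strict_mono[of "\<bar>v\<bar>" d 2] by simp

lemma uv: "uu p * vv p = (dist p x)^2 - (dist p y)^2"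
  unfolding uu_def vv_def by (simp add: power2_eq_square algebra_simps)

lemma ca_formula: "ca p = (uu p * vv p + d^2)/(2*d)"
proof -
  have "uu p * vv p = 2 * d * ca p - d^2" unfolding uv dist_x_sq dist_y_sq
    by (simp add: power2_eq_square algebra_simps)
  then show ?thesis using d_pos by (simp add: field_simps)
qed

lemma cb_sq: "(cb p)^2 = ((uu p)^2 - d^2) * (d^2 - (vv p)^2) / (4*d^2)"
proof -
  have r1: "dist p x = (uu p + vv p)/2" unfolding uu_def vv_def by simp
  have "(cb p)^2 = (dist p x)^2 - (ca p)^2" using dist_x_sq[of p] by simp
  also have "\<dots> = ((uu p + vv p)/2)^2 - ((uu p * vv p + d^2)/(2*d))^2" unfolding r1 ca_formula ..
  also have "\<dots> = ((uu p)^2 - d^2) * (d^2 - (vv p)^2) / (4*d^2)"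
    using d_pos by (simp add: field_simps power2_eq_square)
  finally show ?thesis .
qed

lemma abs_hh: "cb p \<noteq> 0 \<Longrightarrow> \<bar>hh p\<bar> = uu p - d"
  using uu_ge[of p] by (auto simp: hh_def abs_mult sgn_if)

lemma sqrt_sq_any: "(sqrt a)^2 = \<bar>a\<bar>"
proof (cases "a \<ge> 0")
  case False
  have "sqrt a = - sqrt (-a)" using real_sqrt_minus[of "-a"] by simp
  then show ?thesis using False by simp
qed simp

lemma Phi_comp:
  assumes "\<bar>v\<bar> \<le> d"
  shows "dist (Phi v h) x = (d + (abs h) + v)/2" "dist (Phi v h) y = (d + (abs h) - v)/2"
proof -
  define u where "u = d + (abs h)"
  define A where "A = (u* v + d^2)/(2*d)"
  define B where "B = sqrt(h*((abs h)+2*d)) * sqrt(d^2-v^2)/(2*d)"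
  have P: "Phi v h = pt A B" unfolding Phi_def A_def B_def u_def ..
  have vd: "d^2 - v^2 \<ge> 0" using sq_le_d[OF assms] by simp
  have B2: "B^2 = (u^2 - d^2)*(d^2-v^2)/(4*d^2)"
  proof -
    have "B^2 = \<bar>h*((abs h)+2*d)\<bar> * \<bar>d^2-v^2\<bar> / (4*d^2)"
      unfolding B_def by (simp add: power_divide power_mult_distrib sqrt_sq_any)
    also have "\<bar>h*((abs h)+2*d)\<bar> = u^2 - d^2"
    proof -
      have "\<bar>h*((abs h)+2*d)\<bar> = \<bar>h\<bar>*((abs h)+2*d)" using d_pos by (simp add: abs_mult)
      then show ?thesis by (simp add: u_def power2_eq_square algebra_simps)
    qed
    finally show ?thesis using vd by simp
  qed
  have ux: "u + v \<ge> 0" "u - v \<ge> 0" using assms unfolding u_def by auto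
  have "(dist (Phi v h) x)^2 = A^2 + B^2" unfolding P dist_x_sq ca_pt cb_pt ..
  also have "\<dots> = ((u+v)/2)^2" unfolding B2 A_def using d_pos
    by (simp add: field_simps power2_eq_square)
  finally show "dist (Phi v h) x = (d + (abs h) + v)/2"
    using ux by (simp add: u_def power2_eq_iff_nonneg)
  have "(dist (Phi v h) y)^2 = (A-d)^2 + B^2" unfolding P dist_y_sq ca_pt cb_pt ..
  also have "\<dots> = ((u-v)/2)^2" unfolding B2 A_def using d_pos
    by (simp add: field_simps power2_eq_square)
  finally show "dist (Phi v h) y = (d + (abs h) - v)/2"
    using ux by (simp add: u_def power2_eq_iff_nonneg)
qed

lemma vv_Phi: "\<bar>v\<bar> \<le> d \<Longrightarrow> vv (Phi v h) = v"
  by (simp add: vv_def Phi_comp field_simps)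
lemma uu_Phi: "\<bar>v\<bar> \<le> d \<Longrightarrow> uu (Phi v h) = d + (abs h)"
  by (simp add: uu_def Phi_comp field_simps)

lemma sgn_sqrt: "sgn (sqrt a) = sgn a"
  by (cases "a \<ge> 0") (auto simp: sgn_if real_sqrt_minus[symmetric])

lemma hh_Phi: assumes "\<bar>v\<bar> \<le> d" "\<bar>v\<bar> < d \<or> h = 0" shows "hh (Phi v h) = h"
proof (cases "h = 0")
  case True
  then show ?thesis using assms by (simp add: hh_def uu_Phi)
next
  case False
  then have vd: "d^2 - v^2 > 0" using assms sq_less_d by auto
  have pos: "(abs h)+2*d > 0" using d_pos by simp
  have "sgn (cb (Phi v h)) = sgn (sqrt(h*((abs h)+2*d)) * sqrt(d^2-v^2)/(2*d))"
    unfolding Phi_def cb_pt ..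
  also have "\<dots> = sgn h" using vd pos d_pos
    by (simp add: sgn_mult sgn_sqrt sgn_divide)
  finally show ?thesis using assms by (simp add: hh_def uu_Phi sgn_mult_abs)
qed

end

context bip begin

lemma lens_good: assumes "p \<in> lens" shows "cb p \<noteq> 0 \<or> uu p = d"
proof (cases "cb p = 0")
  case True
  show ?thesis
  proof (cases "\<bar>vv p\<bar> < d")
    case True
    have "0 = ((uu p)^2 - d^2) * (d^2 - (vv p)^2)" using cb_sq[of p] \<open>cb p = 0\<close> d_pos by simp
    moreover have "d^2 - (vv p)^2 > 0" using sq_less_d[OF True] by simp
    ultimately have "(uu p)^2 = d^2" by simp
    then have "uu p = d" using uu_ge[of p] d_pos by (simp add: power2_eq_iff_nonneg)
    then show ?thesis by simp
  next
    case False
    have r: "dist p x \<le> d" "dist p y \<le> d" using assms by (auto simp: lens_def dist_commute)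
    have "vv p = d \<or> vv p = -d" using False vv_le[of p] by auto
    then have "uu p = d" using r zero_le_dist[of p x] zero_le_dist[of p y] unfolding vv_def uu_def by (smt (verit))
    then show ?thesis by simp
  qed
qed simp

lemma abs_hh': "cb p \<noteq> 0 \<or> uu p = d \<Longrightarrow> \<bar>hh p\<bar> = uu p - d"
  using abs_hh by (auto simp: hh_def)

lemma sqrt_sgn_mult: "X \<ge> 0 \<Longrightarrow> sqrt (sgn b * X) = sgn b * sqrt X"
  by (cases "b > 0"; cases "b = 0") (auto simp: sgn_if real_sqrt_minus)

lemma Phi_hh: assumes "cb p \<noteq> 0 \<or> uu p = d" shows "Phi (vv p) (hh p) = p"
proof -
  define u where "u = uu p"
  define v where "v = vv p"
  define b where "b = cb p"
  have ah: "\<bar>hh p\<bar> = u - d" using abs_hh'[OF assms] by (simp add: u_def)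
  have ud: "u \<ge> d" using uu_ge[of p] by (simp add: u_def)
  have vd: "d^2 - v^2 \<ge> 0" using sq_le_d[OF vv_le[of p]] by (simp add: v_def)
  have A: "((d+\<bar>hh p\<bar>) * v + d^2)/(2*d) = ca p"
    unfolding ah ca_formula by (simp add: u_def v_def)
  have hexp: "hh p * (\<bar>hh p\<bar> + 2*d) = sgn b * (u^2 - d^2)"
    unfolding ah by (simp add: hh_def b_def u_def power2_eq_square algebra_simps)
  have "sqrt (hh p * (\<bar>hh p\<bar> + 2*d)) * sqrt (d^2 - v^2) / (2*d)
        = sgn b * sqrt (((u^2 - d^2) * (d^2 - v^2)) / (4*d^2))"
  proof -
    have s4: "sqrt (4*d^2) = 2*d" using d_pos by (simp add: real_sqrt_mult)
    have "d^2 \<le> u^2" using ud d_pos by (simp add: power_mono)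
    then have s1: "sqrt (sgn b * (u^2 - d^2)) = sgn b * sqrt (u^2 - d^2)"
      by (intro sqrt_sgn_mult) simp
    have s2: "sqrt (((u^2 - d^2) * (d^2 - v^2)) / (4*d^2)) = sqrt (u^2 - d^2) * sqrt (d^2 - v^2) / (2*d)"
      by (subst real_sqrt_divide, subst s4, subst real_sqrt_mult, rule refl)
    show ?thesis unfolding hexp s1 s2 by simp
  qed
  also have "\<dots> = sgn b * sqrt (b^2)" using cb_sq[of p] by (simp add: b_def u_def v_def)
  also have "\<dots> = b" by (simp add: sgn_mult_abs)
  finally have B: "sqrt (hh p * (\<bar>hh p\<bar> + 2*d)) * sqrt (d^2 - v^2) / (2*d) = cb p"
    by (simp add: b_def)
  show ?thesis unfolding Phi_def using A B pt_ca_cb[of p] by (simp add: v_def)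
qed

lemma Phi_hh_lens: "p \<in> lens \<Longrightarrow> Phi (vv p) (hh p) = p"
  using Phi_hh lens_good by blast

lemma in_lens_Phi: assumes "\<bar>v\<bar> \<le> d" shows "Phi v h \<in> lens \<longleftrightarrow> \<bar>h\<bar> \<le> d - \<bar>v\<bar>"
  using assms Phi_comp[OF assms, of h] unfolding lens_def by (auto simp: dist_commute)

lemma Phi_left: "Phi (-d) 0 = x"
proof -
  have "pt 0 0 = x" by (simp add: pt_def)
  then show ?thesis using d_pos by (simp add: Phi_def power2_eq_square)
qed

lemma Phi_right: "Phi d 0 = y"
proof -
  have "pt d 0 = y" using d_pos by (simp add: pt_def)
  then show ?thesis using d_pos by (simp add: Phi_def power2_eq_square)
qed

lemma continuous_on_Phi:
  assumes "continuous_on S f" "continuous_on S g"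
  shows "continuous_on S (\<lambda>t. Phi (f t) (g t))"
  unfolding Phi_def pt_def using d_pos
  by (intro continuous_intros assms) auto

lemma continuous_on_cb: "continuous_on S cb"
  unfolding cb_def[abs_def] using d_pos by (intro continuous_intros) auto

lemma continuous_on_uu: "continuous_on S uu"
  unfolding uu_def[abs_def] by (intro continuous_intros)

lemma continuous_on_vv: "continuous_on S vv"
  unfolding vv_def[abs_def] by (intro continuous_intros)

lemma continuous_on_hh: "continuous_on lens hh"
  unfolding continuous_on_def
proof
  fix p assume p: "p \<in> lens"
  have cbt: "(cb \<longlongrightarrow> cb p) (at p within lens)"
    using continuous_on_cb[of lens] p by (simp add: continuous_on_def)
  have uut: "(uu \<longlongrightarrow> uu p) (at p within lens)"
    using continuous_on_uu[of lens] p by (simp add: continuous_on_def)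
  show "(hh \<longlongrightarrow> hh p) (at p within lens)"
  proof (cases "cb p = 0")
    case False
    have "((\<lambda>q. sgn (cb q) * (uu q - d)) \<longlongrightarrow> sgn (cb p) * (uu p - d)) (at p within lens)"
      by (intro tendsto_intros cbt uut False)
    then show ?thesis by (simp add: hh_def[abs_def])
  next
    case True
    then have "uu p = d" using lens_good[OF p] by simp
    then have hp: "hh p = 0" by (simp add: hh_def)
    have "eventually (\<lambda>q. norm (hh q) \<le> uu q - d) (at p within lens)"
      by (intro always_eventually allI) (use uu_ge in \<open>auto simp: hh_def abs_mult sgn_if\<close>)
    moreover have "((\<lambda>q. uu q - d) \<longlongrightarrow> 0) (at p within lens)"
      using tendsto_diff[OF uut tendsto_const[of d]] \<open>uu p = d\<close> by simp
    ultimately have "(hh \<longlongrightarrow> 0) (at p within lens)" by (rule Lim_null_comparison)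
    then show ?thesis using hp by simp
  qed
qed

lemma compact_lens: "compact lens"
  unfolding lens_def by (intro compact_Int_closed) auto

end

context bip begin

definition "lip1 f \<longleftrightarrow> (\<forall>v\<in>{-d..d}. \<forall>w\<in>{-d..d}. \<bar>f v - f w\<bar> \<le> \<bar>v - w\<bar>)"
definition "good f \<longleftrightarrow> lip1 f \<and> f (-d) = 0 \<and> f d = 0"
definition "goodpair L U \<longleftrightarrow> good L \<and> good U \<and> (\<forall>v\<in>{-d..d}. L v \<le> 0 \<and> 0 \<le> U v)"
definition "region L U = {p \<in> lens. L (vv p) \<le> hh p \<and> hh p \<le> U (vv p)}"
definition "DD L U = {z. fst z \<in> {-d..d} \<and> L (fst z) \<le> snd z \<and> snd z \<le> U (fst z)}"
definition "side f t = Phi (-d + 2*d*t) (f (-d + 2*d*t))"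
definition "graph f = (\<lambda>v. Phi v (f v)) ` {-d..d}"

lemma lip1_cont: "lip1 f \<Longrightarrow> continuous_on {-d..d} f"
  apply (rule lipschitz_on_continuous_on[where L=1])
  apply (rule lipschitz_onI)
  by (auto simp: lip1_def dist_real_def)

lemma good_bound: assumes "good f" "v \<in> {-d..d}" shows "\<bar>f v\<bar> \<le> d - \<bar>v\<bar>"
proof -
  have l: "lip1 f" "f (-d) = 0" "f d = 0" using assms by (auto simp: good_def)
  have m: "-d \<in> {-d..d}" "d \<in> {-d..d}" using d_pos by auto
  have "\<bar>f v - f (-d)\<bar> \<le> \<bar>v - (-d)\<bar>" using l(1) assms(2) m(1) unfolding lip1_def by blast
  moreover have "\<bar>f v - f d\<bar> \<le> \<bar>v - d\<bar>" using l(1) assms(2) m(2) unfolding lip1_def by blast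
  ultimately show ?thesis using l assms(2) by auto
qed

lemma goodpair_end: assumes "goodpair L U" "v \<in> {-d..d}" "\<bar>v\<bar> = d"
  shows "L v = 0" "U v = 0"
  using good_bound[of L v] good_bound[of U v] assms by (auto simp: goodpair_def)

lemma DD_ok: assumes "goodpair L U" "z \<in> DD L U" shows "\<bar>fst z\<bar> < d \<or> snd z = 0"
proof (cases "\<bar>fst z\<bar> < d")
  case False
  then have e: "\<bar>fst z\<bar> = d" using assms by (auto simp: DD_def)
  have "fst z \<in> {-d..d}" using assms by (auto simp: DD_def)
  then show ?thesis using goodpair_end[OF assms(1) _ e] assms(2) by (auto simp: DD_def)
qed simp

lemma DD_bound: assumes "goodpair L U" "z \<in> DD L U" shows "\<bar>snd z\<bar> \<le> d - \<bar>fst z\<bar>"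
  using assms good_bound[of L "fst z"] good_bound[of U "fst z"] by (auto simp: DD_def goodpair_def)

lemma region_image: assumes "goodpair L U"
  shows "region L U = (\<lambda>z. Phi (fst z) (snd z)) ` DD L U"
proof
  show "region L U \<subseteq> (\<lambda>z. Phi (fst z) (snd z)) ` DD L U"
  proof
    fix p assume p: "p \<in> region L U"
    then have "p = Phi (vv p) (hh p)" using Phi_hh_lens by (auto simp: region_def)
    moreover have "(vv p, hh p) \<in> DD L U" using p vv_le[of p] by (auto simp: region_def DD_def)
    ultimately show "p \<in> (\<lambda>z. Phi (fst z) (snd z)) ` DD L U"
      by (intro rev_image_eqI[where x="(vv p, hh p)"]) simp_all
  qed
  show "(\<lambda>z. Phi (fst z) (snd z)) ` DD L U \<subseteq> region L U"
  proof
    fix p assume "p \<in> (\<lambda>z. Phi (fst z) (snd z)) ` DD L U"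
    then obtain v h where z: "(v,h) \<in> DD L U" and p: "p = Phi v h" by auto
    have v: "\<bar>v\<bar> \<le> d" using z by (auto simp: DD_def)
    have "p \<in> lens" unfolding p using in_lens_Phi[OF v] DD_bound[OF assms z] by simp
    moreover have "vv p = v" "hh p = h" using p vv_Phi[OF v] hh_Phi[OF v] DD_ok[OF assms z] by auto
    ultimately show "p \<in> region L U" using z by (auto simp: region_def DD_def)
  qed
qed

lemma DD_image: assumes "goodpair L U"
  shows "DD L U = (\<lambda>z. (fst z, L (fst z) + snd z * (U (fst z) - L (fst z)))) ` ({-d..d} \<times> {0..1})"
proof
  show "DD L U \<subseteq> (\<lambda>z. (fst z, L (fst z) + snd z * (U (fst z) - L (fst z)))) ` ({-d..d} \<times> {0..1})"
  proof
    fix z assume z: "z \<in> DD L U"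
    obtain v h where zz: "z = (v,h)" by fastforce
    have v: "v \<in> {-d..d}" "L v \<le> h" "h \<le> U v" using z zz by (auto simp: DD_def)
    show "z \<in> (\<lambda>z. (fst z, L (fst z) + snd z * (U (fst z) - L (fst z)))) ` ({-d..d} \<times> {0..1})"
    proof (cases "L v = U v")
      case True
      then have "h = L v" using v by auto
      then have "z = (\<lambda>z. (fst z, L (fst z) + snd z * (U (fst z) - L (fst z)))) (v,0)" using zz by simp
      moreover have "(v,0) \<in> {-d..d} \<times> {0..1::real}" using v by simp
      ultimately show ?thesis by (rule image_eqI)
    next
      case False
      then have lu: "L v < U v" using v by auto
      define s where "s = (h - L v)/(U v - L v)"
      have "s \<ge> 0" using v lu unfolding s_def by (intro divide_nonneg_pos) auto
      moreover have "s \<le> 1" using v lu unfolding s_def by (subst divide_le_eq_1) auto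
      moreover have "L v + s * (U v - L v) = h" using lu by (simp add: s_def)
      ultimately have "z = (\<lambda>z. (fst z, L (fst z) + snd z * (U (fst z) - L (fst z)))) (v,s)"
        "(v,s) \<in> {-d..d} \<times> {0..1::real}" using zz v by auto
      then show ?thesis by (rule image_eqI)
    qed
  qed
  show "(\<lambda>z. (fst z, L (fst z) + snd z * (U (fst z) - L (fst z)))) ` ({-d..d} \<times> {0..1}) \<subseteq> DD L U"
  proof
    fix w assume "w \<in> (\<lambda>z. (fst z, L (fst z) + snd z * (U (fst z) - L (fst z)))) ` ({-d..d} \<times> {0..1})"
    then obtain v s where vs: "v \<in> {-d..d}" "s \<in> {0..1}" and w: "w = (v, L v + s * (U v - L v))" by auto
    have "L v \<le> 0 \<and> 0 \<le> U v" using assms vs unfolding goodpair_def by blast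
    then have "L v \<le> U v" by linarith
    then have "0 \<le> s * (U v - L v)" "s * (U v - L v) \<le> U v - L v" using vs
      by (auto intro: mult_left_le_one_le)
    then show "w \<in> DD L U" using vs w by (auto simp: DD_def)
  qed
qed

lemma cont_comp_fst: assumes "lip1 f" shows "continuous_on ({-d..d} \<times> T) (\<lambda>z. f (fst z))"
  by (rule continuous_on_compose2[OF lip1_cont[OF assms] continuous_on_fst[OF continuous_on_id]]) auto

lemma compact_DD: assumes "goodpair L U" shows "compact (DD L U)"
proof -
  have cL: "continuous_on ({-d..d} \<times> {0..1::real}) (\<lambda>z. L (fst z))"
    using assms by (intro cont_comp_fst) (auto simp: goodpair_def good_def)
  have cU: "continuous_on ({-d..d} \<times> {0..1::real}) (\<lambda>z. U (fst z))"
    using assms by (intro cont_comp_fst) (auto simp: goodpair_def good_def)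
  show ?thesis unfolding DD_image[OF assms]
    by (intro compact_continuous_image compact_Times compact_Icc continuous_intros cL cU)
qed

lemma continuous_on_Phi2: "continuous_on S (\<lambda>z. Phi (fst z) (snd z))"
  by (intro continuous_on_Phi continuous_intros)

lemma compact_region: assumes "goodpair L U" shows "compact (region L U)"
  unfolding region_image[OF assms]
  by (intro compact_continuous_image compact_DD assms continuous_on_Phi2)

lemma inj_Phi_DD: assumes "goodpair L U" shows "inj_on (\<lambda>z. Phi (fst z) (snd z)) (DD L U)"
proof (rule inj_onI)
  fix z w assume z: "z \<in> DD L U" and w: "w \<in> DD L U" and e: "Phi (fst z) (snd z) = Phi (fst w) (snd w)"
  have vz: "\<bar>fst z\<bar> \<le> d" and vw: "\<bar>fst w\<bar> \<le> d" using z w by (auto simp: DD_def)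
  have "fst z = fst w" using vv_Phi[OF vz, of "snd z"] vv_Phi[OF vw, of "snd w"] e by simp
  moreover have "snd z = snd w"
    using hh_Phi[OF vz DD_ok[OF assms z]] hh_Phi[OF vw DD_ok[OF assms w]] e by simp
  ultimately show "z = w" by (simp add: prod_eq_iff)
qed

lemma between0: assumes "0 \<le> m" "m \<le> (1::real)"
  shows "min 0 h \<le> (1-m)*h \<and> (1-m)*h \<le> max 0 h"
proof (cases "h \<ge> 0")
  case True
  have "m*h \<ge> 0" "m*h \<le> h" using assms True by (auto intro: mult_left_le_one_le)
  then show ?thesis using True by (simp add: algebra_simps)
next
  case False
  have "m*h \<le> 0" "m*h \<ge> h" using assms False
    by (auto simp: mult_le_0_iff)
  then show ?thesis using False by (simp add: algebra_simps)
qed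

lemma contractible_DD: assumes "goodpair L U" shows "contractible (DD L U)"
proof -
  have h1: "homotopic_with_canon (\<lambda>z. True) (DD L U) (DD L U) (\<lambda>z. z) (\<lambda>z. (fst z, 0))"
  proof (rule homotopic_with_linear)
    show "continuous_on (DD L U) (\<lambda>z. z)" by (rule continuous_on_id)
    show "continuous_on (DD L U) (\<lambda>z. (fst z, 0::real))" by (intro continuous_intros)
    fix z assume z: "z \<in> DD L U"
    show "closed_segment z (fst z, 0) \<subseteq> DD L U"
    proof
      fix w assume "w \<in> closed_segment z (fst z, 0)"
      then obtain m where m: "0 \<le> m" "m \<le> 1" and w: "w = (1 - m) *\<^sub>R z + m *\<^sub>R (fst z, 0)"
        by (auto simp: closed_segment_def)
      have fw: "fst w = fst z" "snd w = (1-m) * snd z" unfolding w by (simp_all add: algebra_simps)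
      have "L (fst z) \<le> 0" "0 \<le> U (fst z)" using z assms by (auto simp: DD_def goodpair_def)
      moreover have "L (fst z) \<le> snd z" "snd z \<le> U (fst z)" using z by (auto simp: DD_def)
      ultimately have "L (fst z) \<le> (1-m) * snd z \<and> (1-m) * snd z \<le> U (fst z)"
        using between0[OF m, of "snd z"] by linarith
      then show "w \<in> DD L U" using z fw by (auto simp: DD_def)
    qed
  qed
  have h2: "homotopic_with_canon (\<lambda>z. True) (DD L U) (DD L U) (\<lambda>z. (fst z, 0)) (\<lambda>z. (0, 0))"
  proof (rule homotopic_with_linear)
    show "continuous_on (DD L U) (\<lambda>z. (fst z, 0::real))" by (intro continuous_intros)
    show "continuous_on (DD L U) (\<lambda>z. (0::real, 0::real))" by (intro continuous_intros)
    fix z assume z: "z \<in> DD L U"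
    show "closed_segment (fst z, 0) (0, 0) \<subseteq> DD L U"
    proof
      fix w assume "w \<in> closed_segment (fst z, 0) ((0::real), (0::real))"
      then obtain m where m: "0 \<le> m" "m \<le> 1" and w: "w = (1 - m) *\<^sub>R (fst z, 0) + m *\<^sub>R (0, 0)"
        by (auto simp: closed_segment_def)
      have fw: "fst w = (1-m) * fst z" "snd w = 0" unfolding w by simp_all
      have "\<bar>fst z\<bar> \<le> d" using z by (auto simp: DD_def)
      then have "\<bar>(1-m) * fst z\<bar> \<le> d" using between0[OF m, of "fst z"] by linarith
      then have "(1-m) * fst z \<in> {-d..d}" by auto
      then show "w \<in> DD L U" using assms fw by (auto simp: DD_def goodpair_def)
    qed
  qed
  show ?thesis unfolding contractible_def
    using homotopic_with_trans[OF h1 h2] by (auto simp: id_def)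
qed

lemma simply_connected_region: assumes "goodpair L U" shows "simply_connected (region L U)"
proof -
  obtain g where "homeomorphism (DD L U) (region L U) (\<lambda>z. Phi (fst z) (snd z)) g"
    using homeomorphism_compact[OF compact_DD[OF assms] continuous_on_Phi2
        region_image[OF assms, symmetric] inj_Phi_DD[OF assms]] by blast
  then have "DD L U homeomorphic region L U" unfolding homeomorphic_def by blast
  then show ?thesis
    using contractible_imp_simply_connected[OF contractible_DD[OF assms]] homeomorphic_simply_connected by blast
qed

end

context bip begin

lemma vv_in: "vv p \<in> {-d..d}"
  using vv_le[of p] by (simp add: abs_le_iff)

lemma cont_f_vv: "lip1 f \<Longrightarrow> continuous_on lens (\<lambda>p. f (vv p))"
  by (rule continuous_on_compose2[OF lip1_cont continuous_on_vv]) (use vv_in in auto)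

lemma goodpair_lip: "goodpair L U \<Longrightarrow> lip1 L \<and> lip1 U"
  by (simp add: goodpair_def good_def)

lemma graph_in_region:
  assumes "goodpair L U" "v \<in> {-d..d}"
  shows "Phi v (U v) \<in> region L U" "Phi v (L v) \<in> region L U"
proof -
  have "L v \<le> 0 \<and> 0 \<le> U v" using assms unfolding goodpair_def by blast
  then have "(v, U v) \<in> DD L U" "(v, L v) \<in> DD L U" using assms(2) by (auto simp: DD_def)
  then show "Phi v (U v) \<in> region L U" "Phi v (L v) \<in> region L U"
    unfolding region_image[OF assms(1)] by (force intro: image_eqI)+
qed

lemma strict_interior:
  assumes gp: "goodpair L U" and p: "p \<in> region L U"
    and nU: "hh p \<noteq> U (vv p)" and nL: "hh p \<noteq> L (vv p)"
  shows "p \<in> interior (region L U)"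
proof -
  define v where "v = vv p"
  define h where "h = hh p"
  have pl: "p \<in> lens" using p by (simp add: region_def)
  have vd: "v \<in> {-d..d}" "\<bar>v\<bar> \<le> d" using vv_le[of p] by (auto simp: v_def)
  have lt: "L v < h" "h < U v" using p nU nL by (auto simp: region_def v_def h_def)
  have gg: "good L" "good U" using gp by (simp_all add: goodpair_def)
  have "\<bar>L v\<bar> \<le> d - \<bar>v\<bar>" "\<bar>U v\<bar> \<le> d - \<bar>v\<bar>" using good_bound[OF gg(1) vd(1)] good_bound[OF gg(2) vd(1)] by simp_all
  then have hb: "\<bar>h\<bar> < d - \<bar>v\<bar>" using lt by linarith
  have pe: "p = Phi v h" using Phi_hh_lens[OF pl] by (simp add: v_def h_def)
  have "dist p x < d" "dist p y < d" unfolding pe using Phi_comp[OF vd(2), of h] hb by auto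
  then have pO: "p \<in> ball x d \<inter> ball y d" by (auto simp: dist_commute)
  define F where "F = (\<lambda>q. (hh q - L (vv q), U (vv q) - hh q))"
  define Sx where "Sx = (ball x d \<inter> ball y d) \<inter> F -` ({0<..} \<times> {0<..})"
  have sub: "ball x d \<inter> ball y d \<subseteq> lens" by (auto simp: lens_def)
  have cF: "continuous_on (ball x d \<inter> ball y d) F"
  proof -
    have "continuous_on lens F" unfolding F_def
      using continuous_on_hh cont_f_vv goodpair_lip[OF gp] by (intro continuous_intros) auto
    then show ?thesis using continuous_on_subset sub by blast
  qed
  have "open Sx" unfolding Sx_def
    by (intro continuous_open_preimage cF open_Int open_ball open_Times open_greaterThan)
  moreover have "p \<in> Sx" using pO lt by (simp add: Sx_def F_def v_def h_def)
  moreover have "Sx \<subseteq> region L U"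
  proof
    fix q assume "q \<in> Sx"
    then have "q \<in> lens" "hh q - L (vv q) > 0" "U (vv q) - hh q > 0" using sub by (auto simp: Sx_def F_def)
    then show "q \<in> region L U" by (simp add: region_def)
  qed
  ultimately show ?thesis by (rule interiorI)
qed

lemma not_in_region_above:
  assumes gp: "goodpair L U" and v: "v \<in> {-d..d}" and e: "e > 0"
  shows "Phi v (U v + e) \<notin> region L U" "Phi v (L v - e) \<notin> region L U"
proof -
  have vd: "\<bar>v\<bar> \<le> d" using v by auto
  show "Phi v (U v + e) \<notin> region L U"
  proof (cases "\<bar>v\<bar> < d")
    case True
    then show ?thesis using vv_Phi[OF vd] hh_Phi[OF vd] e by (auto simp: region_def)
  next
    case False
    then have "\<bar>v\<bar> = d" using vd by linarith
    then have "U v = 0" using goodpair_end[OF gp v] by auto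
    then show ?thesis using in_lens_Phi[OF vd] e False by (auto simp: region_def)
  qed
  show "Phi v (L v - e) \<notin> region L U"
  proof (cases "\<bar>v\<bar> < d")
    case True
    then show ?thesis using vv_Phi[OF vd] hh_Phi[OF vd] e by (auto simp: region_def)
  next
    case False
    then have "\<bar>v\<bar> = d" using vd by linarith
    then have "L v = 0" using goodpair_end[OF gp v] by auto
    then show ?thesis using in_lens_Phi[OF vd] e False by (auto simp: region_def)
  qed
qed

lemma Phi_tendsto:
  assumes "(g \<longlongrightarrow> l) F" shows "((\<lambda>n. Phi v (g n)) \<longlongrightarrow> Phi v l) F"
proof -
  have "continuous_on UNIV (\<lambda>h. Phi v h)" by (intro continuous_on_Phi continuous_intros)
  then show ?thesis using continuous_on_tendsto_compose[of UNIV "Phi v" g l F] assms by simp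
qed

lemma graph_frontier:
  assumes gp: "goodpair L U" and v: "v \<in> {-d..d}"
  shows "Phi v (U v) \<in> frontier (region L U)" "Phi v (L v) \<in> frontier (region L U)"
proof -
  have lim: "(\<lambda>n. inverse (real (Suc n))) \<longlonglongrightarrow> 0" by (rule LIMSEQ_inverse_real_of_nat)
  have t1: "(\<lambda>n. Phi v (U v + inverse (real (Suc n)))) \<longlonglongrightarrow> Phi v (U v)"
    using Phi_tendsto[OF tendsto_add[OF tendsto_const lim, of "U v"]] by simp
  have t2: "(\<lambda>n. Phi v (L v - inverse (real (Suc n)))) \<longlonglongrightarrow> Phi v (L v)"
    using Phi_tendsto[OF tendsto_diff[OF tendsto_const lim, of "L v"]] by simp
  have "Phi v (U v) \<in> closure (- region L U)"
    unfolding closure_sequential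
    by (rule exI[where x="\<lambda>n. Phi v (U v + inverse (real (Suc n)))"])
      (use t1 not_in_region_above(1)[OF gp v] in auto)
  then have "Phi v (U v) \<notin> interior (region L U)" by (simp add: closure_complement)
  then show "Phi v (U v) \<in> frontier (region L U)"
    using graph_in_region[OF gp v] closure_subset unfolding frontier_def by blast
  have "Phi v (L v) \<in> closure (- region L U)"
    unfolding closure_sequential
    by (rule exI[where x="\<lambda>n. Phi v (L v - inverse (real (Suc n)))"])
      (use t2 not_in_region_above(2)[OF gp v] in auto)
  then have "Phi v (L v) \<notin> interior (region L U)" by (simp add: closure_complement)
  then show "Phi v (L v) \<in> frontier (region L U)"
    using graph_in_region[OF gp v] closure_subset unfolding frontier_def by blast
qed

lemma frontier_region:
  assumes gp: "goodpair L U"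
  shows "frontier (region L U) = graph U \<union> graph L"
proof
  show "graph U \<union> graph L \<subseteq> frontier (region L U)"
    using graph_frontier[OF gp] by (auto simp: graph_def)
  show "frontier (region L U) \<subseteq> graph U \<union> graph L"
  proof
    fix p assume pf: "p \<in> frontier (region L U)"
    have cl: "closed (region L U)" using compact_region[OF gp] by (rule compact_imp_closed)
    then have p: "p \<in> region L U" "p \<notin> interior (region L U)" using pf by (auto simp: frontier_def)
    have pl: "p \<in> lens" using p by (simp add: region_def)
    have vd: "vv p \<in> {-d..d}" using vv_le[of p] by auto
    have "hh p = U (vv p) \<or> hh p = L (vv p)" using strict_interior[OF gp p(1)] p(2) by blast
    then show "p \<in> graph U \<union> graph L"
    proof
      assume "hh p = U (vv p)"
      then have "p = (\<lambda>v. Phi v (U v)) (vv p)" using Phi_hh_lens[OF pl] by simp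
      then have "p \<in> graph U" unfolding graph_def using vd by (rule image_eqI)
      then show ?thesis by simp
    next
      assume "hh p = L (vv p)"
      then have "p = (\<lambda>v. Phi v (L v)) (vv p)" using Phi_hh_lens[OF pl] by simp
      then have "p \<in> graph L" unfolding graph_def using vd by (rule image_eqI)
      then show ?thesis by simp
    qed
  qed
qed

lemma side_v: assumes "t \<in> {0..1}" shows "\<bar>-d + 2*d*t\<bar> \<le> d"
proof -
  have "t*d \<le> d" "0 \<le> t*d" using assms d_pos mult_left_le_one_le[of d t] by auto
  then show ?thesis by (simp add: abs_le_iff algebra_simps)
qed
lemma side_v': "t \<in> {0..1} \<Longrightarrow> -d + 2*d*t \<in> {-d..d}"
  using side_v[of t] by (simp add: abs_le_iff)

lemma path_image_side: "path_image (side f) = graph f"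
proof
  show "path_image (side f) \<subseteq> graph f"
  proof
    fix q assume "q \<in> path_image (side f)"
    then obtain t where t: "t \<in> {0..1}" "q = side f t" by (auto simp: path_image_def)
    have "-d + 2*d*t \<in> {-d..d}" using side_v'[OF t(1)] .
    then show "q \<in> graph f" unfolding t(2) graph_def side_def by (rule imageI)
  qed
  show "graph f \<subseteq> path_image (side f)"
  proof
    fix q assume "q \<in> graph f"
    then obtain v where v: "v \<in> {-d..d}" "q = Phi v (f v)" by (auto simp: graph_def)
    define t where "t = (v + d)/(2*d)"
    have "t \<ge> 0" using v d_pos unfolding t_def by (intro divide_nonneg_pos) auto
    moreover have "t \<le> 1" using v d_pos unfolding t_def by (subst divide_le_eq_1) auto
    moreover have "-d + 2*d*t = v" using d_pos by (simp add: t_def field_simps)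
    ultimately have "q = side f t" "t \<in> {0..1}" using v by (auto simp: side_def)
    then show "q \<in> path_image (side f)" unfolding path_image_def by (rule image_eqI)
  qed
qed

lemma vv_side: "t \<in> {0..1} \<Longrightarrow> vv (side f t) = -d + 2*d*t"
  unfolding side_def by (rule vv_Phi[OF side_v])

lemma arc_side: assumes "good f" shows "arc (side f)"
  unfolding arc_def
proof
  have cf: "continuous_on {0..1} (\<lambda>t. f (-d + 2*d*t))"
  proof (rule continuous_on_compose2[OF lip1_cont[of f]])
    show "lip1 f" using assms by (simp add: good_def)
    show "continuous_on {0..1} (\<lambda>t. -d + 2*d*t)" by (intro continuous_intros)
    show "(\<lambda>t. -d + 2*d*t) ` {0..1} \<subseteq> {-d..d}" using side_v' by blast
  qed
  show "path (side f)" unfolding path_def side_def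
    by (intro continuous_on_Phi cf continuous_intros)
  show "inj_on (side f) {0..1}"
  proof (rule inj_onI)
    fix s t assume "s \<in> {0..1}" "t \<in> {0..1}" "side f s = side f t"
    then have "-d + 2*d* s = -d + 2*d*t" using vv_side by metis
    then show "s = t" using d_pos by simp
  qed
qed

lemma side_start: "good f \<Longrightarrow> pathstart (side f) = x"
  by (simp add: pathstart_def side_def good_def Phi_left)
lemma side_finish: "good f \<Longrightarrow> pathfinish (side f) = y"
  by (simp add: pathfinish_def side_def good_def Phi_right)

lemma slender_side_side: assumes "good f" shows "slender_side (side f) x y"
  unfolding slender_side_def
proof (intro ballI impI)
  fix s t :: real assume s: "s \<in> {0..1}" and t: "t \<in> {0..1}" and st: "s \<le> t"
  define va where "va = -d + 2*d* s"
  define vb where "vb = -d + 2*d*t"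
  have ab: "va \<le> vb" using st d_pos by (simp add: va_def vb_def)
  have ad: "\<bar>va\<bar> \<le> d" "\<bar>vb\<bar> \<le> d" using side_v[OF s] side_v[OF t] by (auto simp: va_def vb_def)
  have "va \<in> {-d..d}" "vb \<in> {-d..d}" using ad by (auto simp: abs_le_iff)
  then have "\<bar>f va - f vb\<bar> \<le> \<bar>va - vb\<bar>" using assms unfolding good_def lip1_def by blast
  then have k: "\<bar>f va\<bar> - \<bar>f vb\<bar> \<le> vb - va" "\<bar>f vb\<bar> - \<bar>f va\<bar> \<le> vb - va" using ab by auto
  show "dist (side f s) x \<le> dist (side f t) x \<and> dist (side f t) y \<le> dist (side f s) y"
    unfolding side_def va_def[symmetric] vb_def[symmetric] Phi_comp[OF ad(1)] Phi_comp[OF ad(2)]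
  proof
    have "d + \<bar>f va\<bar> + va \<le> d + \<bar>f vb\<bar> + vb" using k(1) by simp
    then show "(d + \<bar>f va\<bar> + va)/2 \<le> (d + \<bar>f vb\<bar> + vb)/2" by (rule divide_right_mono) simp
    have "d + \<bar>f vb\<bar> - vb \<le> d + \<bar>f va\<bar> - va" using k(2) by simp
    then show "(d + \<bar>f vb\<bar> - vb)/2 \<le> (d + \<bar>f va\<bar> - va)/2" by (rule divide_right_mono) simp
  qed
qed

lemma segment_region: assumes gp: "goodpair L U" shows "closed_segment x y \<subseteq> region L U"
proof
  fix p assume "p \<in> closed_segment x y"
  then obtain t where t: "0 \<le> t" "t \<le> 1" and p: "p = (1 - t) *\<^sub>R x + t *\<^sub>R y"
    by (auto simp: closed_segment_def)
  have px: "p - x = t *\<^sub>R (y - x)" unfolding p by (simp add: algebra_simps)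
  have py: "p - y = (1-t) *\<^sub>R (x - y)" unfolding p by (simp add: algebra_simps)
  have "dist p x = t * d" unfolding dist_norm px using t by (simp add: d_def dist_norm norm_minus_commute)
  moreover have "dist p y = (1-t) * d" unfolding dist_norm py using t by (simp add: d_def dist_norm)
  moreover have "t * d \<le> d" "(1-t) * d \<le> d" using t d_pos mult_left_le_one_le[of d t] mult_left_le_one_le[of d "1-t"] by auto
  ultimately have pl: "p \<in> lens" by (simp add: lens_def dist_commute)
  have "cb p = 0" unfolding cb_def px by (simp add: c1_def c2_def)
  then have "hh p = 0" by (simp add: hh_def)
  moreover have "L (vv p) \<le> 0 \<and> 0 \<le> U (vv p)" using gp vv_in[of p] unfolding goodpair_def by blast
  ultimately show "p \<in> region L U" using pl by (simp add: region_def)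
qed

lemma construct: assumes gp: "goodpair L U" shows "slender_adornment (region L U) x y"
proof -
  have gU: "good U" and gL: "good L" using gp by (auto simp: goodpair_def)
  have fr: "frontier (region L U) = path_image (side U) \<union> path_image (side L)"
    unfolding path_image_side frontier_region[OF gp] ..
  have "x \<in> path_image (side U)" "y \<in> path_image (side U)"
    using pathstart_in_path_image[of "side U"] pathfinish_in_path_image[of "side U"]
      side_start[OF gU] side_finish[OF gU] by auto
  then have xy': "x \<in> frontier (region L U)" "y \<in> frontier (region L U)" unfolding fr by auto
  show ?thesis unfolding slender_adornment_def adornment_sides_def
    apply (rule exI[where x="side U"], rule exI[where x="side L"])
    using compact_region[OF gp] simply_connected_region[OF gp] xy xy' segment_region[OF gp]
      arc_side[OF gU] arc_side[OF gL] side_start[OF gU] side_start[OF gL]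
      side_finish[OF gU] side_finish[OF gL] fr slender_side_side[OF gU] slender_side_side[OF gL]
    by blast
qed

end

context bip begin

definition "sarc g \<longleftrightarrow> arc g \<and> pathstart g = x \<and> pathfinish g = y \<and> slender_side g x y"
definition "tau g v = (SOME t. t \<in> {0..1} \<and> vv (g t) = v)"
definition "hf g v = hh (g (tau g v))"

lemma vv_x: "vv x = -d" by (simp add: vv_def d_def)
lemma vv_y: "vv y = d" by (simp add: vv_def d_def dist_commute)
lemma cb_x: "cb x = 0" by (simp add: cb_def)
lemma cb_y: "cb y = 0" by (simp add: cb_def c1_def c2_def)
lemma hh_x: "hh x = 0" by (simp add: hh_def cb_x)
lemma hh_y: "hh y = 0" by (simp add: hh_def cb_y)

context
  fixes g assumes sg: "sarc g"
begin

lemma g0: "g 0 = x" using sg by (simp add: sarc_def pathstart_def)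
lemma g1: "g 1 = y" using sg by (simp add: sarc_def pathfinish_def)

lemma r1_mono: "s \<in> {0..1} \<Longrightarrow> t \<in> {0..1} \<Longrightarrow> s \<le> t \<Longrightarrow> dist (g s) x \<le> dist (g t) x"
  using sg unfolding sarc_def slender_side_def by blast
lemma r2_mono: "s \<in> {0..1} \<Longrightarrow> t \<in> {0..1} \<Longrightarrow> s \<le> t \<Longrightarrow> dist (g t) y \<le> dist (g s) y"
  using sg unfolding sarc_def slender_side_def by blast

lemma g_lens: assumes "t \<in> {0..1}" shows "g t \<in> lens"
proof -
  have "dist (g t) x \<le> dist (g 1) x" using r1_mono[OF assms, of 1] assms by auto
  moreover have "dist (g t) y \<le> dist (g 0) y" using r2_mono[of 0 t] assms by auto
  ultimately show ?thesis unfolding lens_def using g0 g1 by (simp add: d_def dist_commute)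
qed

lemma vv_mono: "s \<in> {0..1} \<Longrightarrow> t \<in> {0..1} \<Longrightarrow> s \<le> t \<Longrightarrow> vv (g s) \<le> vv (g t)"
  using r1_mono r2_mono unfolding vv_def by (smt (verit))

lemma path_g: "path g" using sg by (simp add: sarc_def arc_def)
lemma inj_g: "inj_on g {0..1}" using sg by (simp add: sarc_def arc_def)

lemma vv_strict: assumes s: "s \<in> {0..1}" and t: "t \<in> {0..1}" and st: "s < t"
  shows "vv (g s) < vv (g t)"
proof (rule ccontr)
  assume "\<not> vv (g s) < vv (g t)"
  then have eqv: "vv (g s) = vv (g t)" using vv_mono[OF s t] st by simp
  define c1' where "c1' = dist (g s) x"
  define c2' where "c2' = dist (g s) y"
  have e1: "dist (g t) x = c1'" "dist (g t) y = c2'"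
    using eqv r1_mono[OF s t] r2_mono[OF s t] st unfolding vv_def c1'_def c2'_def by (smt (verit))+
  define Q where "Q = {Phi (c1' - c2') (-(c1'+c2'-d)), Phi (c1' - c2') 0, Phi (c1' - c2') (c1'+c2'-d)}"
  have sub: "g ` {s..t} \<subseteq> Q"
  proof
    fix q assume "q \<in> g ` {s..t}"
    then obtain w where w: "w \<in> {s..t}" "q = g w" by auto
    have w01: "w \<in> {0..1}" using w s t by auto
    have "dist (g w) x = c1'" "dist (g w) y = c2'"
      using r1_mono[OF s w01] r1_mono[OF w01 t] r2_mono[OF s w01] r2_mono[OF w01 t] w e1
      unfolding c1'_def c2'_def by auto
    then have vq: "vv q = c1' - c2'" and uq: "uu q = c1' + c2'" using w by (auto simp: vv_def uu_def)
    have "q = Phi (vv q) (hh q)" using Phi_hh_lens g_lens[OF w01] w by simp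
    moreover have "hh q = -(c1'+c2'-d) \<or> hh q = 0 \<or> hh q = c1'+c2'-d"
      using uq by (auto simp: hh_def sgn_if)
    ultimately show "q \<in> Q" unfolding Q_def using vq by auto
  qed
  have "finite (g ` {s..t})" using sub finite_subset unfolding Q_def by auto
  moreover have "inj_on g {s..t}" by (rule inj_on_subset[OF inj_g]) (use s t in auto)
  ultimately have "finite {s..t}" by (rule finite_imageD)
  then show False using infinite_Icc[OF st] by simp
qed

lemma vv_inj: "s \<in> {0..1} \<Longrightarrow> t \<in> {0..1} \<Longrightarrow> vv (g s) = vv (g t) \<Longrightarrow> s = t"
  by (metis less_irrefl linorder_neqE_linordered_idom vv_strict)

lemma vv_surj: assumes "v \<in> {-d..d}" shows "\<exists>t. t \<in> {0..1} \<and> vv (g t) = v"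
proof -
  have c: "continuous_on {0..1} (\<lambda>t. vv (g t))"
    using continuous_on_compose2[OF continuous_on_vv path_g[unfolded path_def]] by auto
  have "vv (g 0) \<le> v" "v \<le> vv (g 1)" using assms g0 g1 vv_x vv_y by auto
  then obtain t where "0 \<le> t" "t \<le> 1" "vv (g t) = v" using IVT'[of "\<lambda>t. vv (g t)" 0 v 1, OF _ _ _ c] by auto
  then show ?thesis by auto
qed

lemma tau_prop: assumes "v \<in> {-d..d}" shows "tau g v \<in> {0..1}" "vv (g (tau g v)) = v"
  using someI_ex[OF vv_surj[OF assms]] unfolding tau_def by auto

lemma tau_vv: assumes "t \<in> {0..1}" shows "tau g (vv (g t)) = t"
proof -
  have v: "vv (g t) \<in> {-d..d}" using vv_in by simp
  show ?thesis using tau_prop[OF v] vv_inj[OF _ assms] by blast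
qed

lemma tau_mono: assumes "v \<in> {-d..d}" "w \<in> {-d..d}" "v \<le> w" shows "tau g v \<le> tau g w"
proof (rule ccontr)
  assume "\<not> tau g v \<le> tau g w"
  then have "tau g w < tau g v" by simp
  then have "vv (g (tau g w)) < vv (g (tau g v))" using vv_strict tau_prop(1) assms by blast
  then show False using tau_prop(2) assms by simp
qed

lemma abs_hh_g: "t \<in> {0..1} \<Longrightarrow> \<bar>hh (g t)\<bar> = uu (g t) - d"
  using abs_hh' lens_good g_lens by blast

lemma abs_step: assumes s: "s \<in> {0..1}" and t: "t \<in> {0..1}" and st: "s \<le> t"
  shows "\<bar>\<bar>hh (g t)\<bar> - \<bar>hh (g s)\<bar>\<bar> \<le> vv (g t) - vv (g s)"
  using abs_hh_g[OF s] abs_hh_g[OF t] r1_mono[OF s t st] r2_mono[OF s t st]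
  unfolding uu_def vv_def by linarith

lemma h_step: assumes s: "s \<in> {0..1}" and t: "t \<in> {0..1}" and st: "s \<le> t"
  shows "\<bar>hh (g t) - hh (g s)\<bar> \<le> vv (g t) - vv (g s)"
proof (cases "hh (g s) * hh (g t) \<ge> 0")
  case True
  then have "\<bar>hh (g t) - hh (g s)\<bar> = \<bar>\<bar>hh (g t)\<bar> - \<bar>hh (g s)\<bar>\<bar>"
    by (auto simp: zero_le_mult_iff)
  then show ?thesis using abs_step[OF s t st] by simp
next
  case False
  have "continuous_on {0..1} (\<lambda>w. cb (g w))"
    by (rule continuous_on_compose2[OF continuous_on_cb path_g[unfolded path_def]]) auto
  then have cc: "continuous_on {s..t} (\<lambda>w. cb (g w))"
    by (rule continuous_on_subset) (use s t in auto)
  have sg1: "hh q > 0 \<Longrightarrow> cb q > 0" "hh q < 0 \<Longrightarrow> cb q < 0" for q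
    using uu_ge[of q] by (auto simp: hh_def sgn_if split: if_splits)
  obtain w where w: "s \<le> w" "w \<le> t" "cb (g w) = 0"
  proof (cases "hh (g s) > 0")
    case True
    then have "hh (g t) < 0" using False by (auto simp: zero_le_mult_iff)
    then have "cb (g t) \<le> 0" "0 \<le> cb (g s)" using sg1 True by (auto intro: less_imp_le)
    then show ?thesis using IVT2'[of "\<lambda>w. cb (g w)" t 0 s, OF _ _ st cc] that by auto
  next
    case nT: False
    then have "hh (g s) < 0" "hh (g t) > 0" using False by (auto simp: zero_le_mult_iff)
    then have "cb (g s) \<le> 0" "0 \<le> cb (g t)" using sg1 by (auto intro: less_imp_le)
    then show ?thesis using IVT'[of "\<lambda>w. cb (g w)" s 0 t, OF _ _ st cc] that by auto
  qed
  have w01: "w \<in> {0..1}" using w s t by auto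
  have hw: "hh (g w) = 0" using w by (simp add: hh_def)
  have "\<bar>\<bar>hh (g t)\<bar> - \<bar>hh (g w)\<bar>\<bar> \<le> vv (g t) - vv (g w)" by (rule abs_step[OF w01 t w(2)])
  moreover have "\<bar>\<bar>hh (g w)\<bar> - \<bar>hh (g s)\<bar>\<bar> \<le> vv (g w) - vv (g s)" by (rule abs_step[OF s w01 w(1)])
  ultimately show ?thesis using hw by linarith
qed

lemma hf_lip: "lip1 (hf g)"
  unfolding lip1_def
proof (intro ballI)
  fix v w assume v: "v \<in> {-d..d}" and w: "w \<in> {-d..d}"
  have k: "\<bar>hf g b - hf g a\<bar> \<le> b - a" if a: "a \<in> {-d..d}" and b: "b \<in> {-d..d}" and ab: "a \<le> b" for a b
  proof -
    have "\<bar>hh (g (tau g b)) - hh (g (tau g a))\<bar> \<le> vv (g (tau g b)) - vv (g (tau g a))"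
      by (rule h_step[OF tau_prop(1)[OF a] tau_prop(1)[OF b] tau_mono[OF a b ab]])
    then show ?thesis using tau_prop(2)[OF a] tau_prop(2)[OF b] by (simp add: hf_def)
  qed
  show "\<bar>hf g v - hf g w\<bar> \<le> \<bar>v - w\<bar>"
  proof (cases "v \<le> w")
    case True
    then show ?thesis using k[OF v w True] by (simp add: abs_minus_commute)
  next
    case False
    then show ?thesis using k[OF w v] by simp
  qed
qed

lemma hf_good: "good (hf g)"
proof -
  have "tau g (-d) = 0" using tau_vv[of 0] g0 vv_x by simp
  moreover have "tau g d = 1" using tau_vv[of 1] g1 vv_y by simp
  ultimately show ?thesis unfolding good_def using hf_lip g0 g1 hh_x hh_y by (simp add: hf_def)
qed

lemma graph_hf: "path_image g = graph (hf g)"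
proof
  show "path_image g \<subseteq> graph (hf g)"
  proof
    fix q assume "q \<in> path_image g"
    then obtain t where t: "t \<in> {0..1}" "q = g t" by (auto simp: path_image_def)
    have "q = Phi (vv (g t)) (hf g (vv (g t)))"
      using Phi_hh_lens[OF g_lens[OF t(1)]] tau_vv[OF t(1)] t(2) by (simp add: hf_def)
    then show "q \<in> graph (hf g)" unfolding graph_def using vv_in by blast
  qed
  show "graph (hf g) \<subseteq> path_image g"
  proof
    fix q assume "q \<in> graph (hf g)"
    then obtain v where v: "v \<in> {-d..d}" "q = Phi v (hf g v)" by (auto simp: graph_def)
    have "q = g (tau g v)"
      using v Phi_hh_lens[OF g_lens[OF tau_prop(1)[OF v(1)]]] tau_prop(2)[OF v(1)] by (simp add: hf_def)
    then show "q \<in> path_image g" unfolding path_image_def using tau_prop(1)[OF v(1)] by blast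
  qed
qed

lemma path_image_g_lens: "path_image g \<subseteq> lens"
  using g_lens by (auto simp: path_image_def)

end

end

context bip begin

lemma good_cont: "good f \<Longrightarrow> continuous_on {-d..d} f"
  by (simp add: good_def lip1_cont)

lemma interval_lemma:
  assumes g1: "good f1" and g2: "good f2" and v: "v \<in> {-d..d}" and lt: "f1 v < f2 v"
  shows "\<exists>a b. -d \<le> a \<and> a < v \<and> v < b \<and> b \<le> d \<and> f1 a = f2 a \<and> f1 b = f2 b
     \<and> (\<forall>w. a < w \<and> w < b \<longrightarrow> f1 w < f2 w)"
proof -
  define D where "D w = f2 w - f1 w" for w
  have cD: "continuous_on {-d..d} D" unfolding D_def using good_cont[OF g1] good_cont[OF g2]
    by (intro continuous_intros)
  have De: "D (-d) = 0" "D d = 0" using g1 g2 by (simp_all add: D_def good_def)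
  have Dv: "D v > 0" using lt by (simp add: D_def)
  have vi: "-d \<le> v" "v \<le> d" using v by auto
  define Za where "Za = {-d..v} \<inter> D -` {..0}"
  have cZa: "closed Za" unfolding Za_def
    by (intro continuous_closed_preimage continuous_on_subset[OF cD]) (use vi in auto)
  have mZa: "-d \<in> Za" using De vi by (simp add: Za_def)
  have bZa: "bdd_above Za" unfolding Za_def by (rule bdd_aboveI[of _ v]) auto
  define a where "a = Sup Za"
  have aZ: "a \<in> Za" unfolding a_def using closed_contains_Sup[OF _ bZa cZa] mZa by blast
  have a_ge: "-d \<le> a" "a \<le> v" "D a \<le> 0" using aZ by (auto simp: Za_def)
  have a_lt: "a < v" using a_ge Dv by (cases "a = v") auto
  have posa: "D w > 0" if "a < w" "w \<le> v" for w
  proof (rule ccontr)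
    assume "\<not> D w > 0"
    then have "w \<in> Za" using that a_ge by (simp add: Za_def)
    then have "w \<le> a" unfolding a_def using bZa by (rule cSup_upper)
    then show False using that by simp
  qed
  define T where "T = {-d..d} \<inter> D -` {0..}"
  have cT: "closed T" unfolding T_def by (intro continuous_closed_preimage cD) auto
  have "{a<..v} \<subseteq> T" using posa a_ge vi by (auto simp: T_def less_imp_le)
  then have "closure {a<..v} \<subseteq> T" using cT by (rule closure_minimal)
  then have "a \<in> T" using a_lt by auto
  then have Da: "D a = 0" using a_ge by (simp add: T_def)
  define Zb where "Zb = {v..d} \<inter> D -` {..0}"
  have cZb: "closed Zb" unfolding Zb_def
    by (intro continuous_closed_preimage continuous_on_subset[OF cD]) (use vi in auto)
  have mZb: "d \<in> Zb" using De vi by (simp add: Zb_def)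
  have bZb: "bdd_below Zb" unfolding Zb_def by (rule bdd_belowI[of _ v]) auto
  define b where "b = Inf Zb"
  have bZ: "b \<in> Zb" unfolding b_def using closed_contains_Inf[OF _ bZb cZb] mZb by blast
  have b_le: "b \<le> d" "v \<le> b" "D b \<le> 0" using bZ by (auto simp: Zb_def)
  have b_gt: "v < b" using b_le Dv by (cases "b = v") auto
  have posb: "D w > 0" if "v \<le> w" "w < b" for w
  proof (rule ccontr)
    assume "\<not> D w > 0"
    then have "w \<in> Zb" using that b_le by (simp add: Zb_def)
    then have "b \<le> w" unfolding b_def using bZb by (rule cInf_lower)
    then show False using that by simp
  qed
  have "{v..<b} \<subseteq> T" using posb b_le vi by (auto simp: T_def less_imp_le)
  then have "closure {v..<b} \<subseteq> T" using cT by (rule closure_minimal)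
  then have "b \<in> T" using b_gt by auto
  then have Db: "D b = 0" using b_le by (simp add: T_def)
  have "\<forall>w. a < w \<and> w < b \<longrightarrow> f1 w < f2 w"
  proof (intro allI impI)
    fix w assume "a < w \<and> w < b"
    then have "D w > 0" using posa posb by (cases "w \<le> v") auto
    then show "f1 w < f2 w" by (simp add: D_def)
  qed
  moreover have "f1 a = f2 a" "f1 b = f2 b" using Da Db unfolding D_def by simp_all
  ultimately show ?thesis using a_ge a_lt b_le b_gt by blast
qed

end

context bip begin

definition "gpath f a b s = Phi (a + (b-a)* s) (f (a + (b-a)* s))"

lemma good_end0: "good f \<Longrightarrow> w \<in> {-d..d} \<Longrightarrow> \<bar>w\<bar> < d \<or> f w = 0"
  using good_bound[of f w] by (cases "\<bar>w\<bar> < d") auto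

lemma Phi_eq_Phi:
  assumes "\<bar>w\<bar> \<le> d" "\<bar>w'\<bar> \<le> d" "\<bar>w\<bar> < d \<or> h = 0" "\<bar>w'\<bar> < d \<or> h' = 0" "Phi w h = Phi w' h'"
  shows "w = w' \<and> h = h'"
  using vv_Phi[OF assms(1), of h] vv_Phi[OF assms(2), of h'] hh_Phi[OF assms(1,3)] hh_Phi[OF assms(2,4)] assms(5)
  by metis

lemma graph_eq:
  assumes "good f1" "good f2" "w \<in> {-d..d}" "w' \<in> {-d..d}" "Phi w (f1 w) = Phi w' (f2 w')"
  shows "w = w' \<and> f1 w = f2 w"
proof -
  have "w = w' \<and> f1 w = f2 w'"
    by (rule Phi_eq_Phi) (use assms good_end0[OF assms(1) assms(3)] good_end0[OF assms(2) assms(4)] in auto)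
  then show ?thesis by force
qed

lemma strict_in_O:
  assumes g1: "good f1" and g2: "good f2" and q: "q \<in> lens"
    and lt: "f1 (vv q) < hh q" "hh q < f2 (vv q)"
  shows "q \<in> ball x d \<inter> ball y d"
proof -
  define v where "v = vv q"
  define h where "h = hh q"
  have vd: "v \<in> {-d..d}" "\<bar>v\<bar> \<le> d" using vv_in[of q] vv_le[of q] by (auto simp: v_def)
  have "\<bar>f1 v\<bar> \<le> d - \<bar>v\<bar>" "\<bar>f2 v\<bar> \<le> d - \<bar>v\<bar>" using good_bound[OF g1 vd(1)] good_bound[OF g2 vd(1)] by simp_all
  then have hb: "\<bar>h\<bar> < d - \<bar>v\<bar>" using lt by (simp add: v_def h_def)
  have pe: "q = Phi v h" using Phi_hh_lens[OF q] by (simp add: v_def h_def)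
  have "dist q x < d" "dist q y < d" unfolding pe using Phi_comp[OF vd(2), of h] hb by auto
  then show ?thesis by (auto simp: dist_commute)
qed

context
  fixes f a b assumes gf: "good f" and ab: "-d \<le> a" "a < b" "b \<le> d"
begin

lemma gparam: "s \<in> {0..1} \<Longrightarrow> a + (b-a)* s \<in> {a..b}"
proof -
  assume s: "s \<in> {0..1}"
  then have "(b-a)* s \<le> b - a" "0 \<le> (b-a)* s" using ab mult_left_le[of s "b-a"] by auto
  then show ?thesis by auto
qed

lemma gparam': assumes "s \<in> {0..1}" shows "a + (b-a)* s \<in> {-d..d}"
  using gparam[OF assms] ab by auto

lemma path_image_gpath: "path_image (gpath f a b) = (\<lambda>w. Phi w (f w)) ` {a..b}"
proof
  show "path_image (gpath f a b) \<subseteq> (\<lambda>w. Phi w (f w)) ` {a..b}"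
    unfolding path_image_def gpath_def using gparam by blast
  show "(\<lambda>w. Phi w (f w)) ` {a..b} \<subseteq> path_image (gpath f a b)"
  proof
    fix q assume "q \<in> (\<lambda>w. Phi w (f w)) ` {a..b}"
    then obtain w where w: "w \<in> {a..b}" "q = Phi w (f w)" by auto
    define s where "s = (w - a)/(b - a)"
    have "s \<ge> 0" using w ab unfolding s_def by (intro divide_nonneg_pos) auto
    moreover have "s \<le> 1" using w ab unfolding s_def by (subst divide_le_eq_1) auto
    moreover have "a + (b-a)* s = w" using ab by (simp add: s_def)
    ultimately have "q = gpath f a b s" "s \<in> {0..1}" using w by (auto simp: gpath_def)
    then show "q \<in> path_image (gpath f a b)" unfolding path_image_def by (rule image_eqI)
  qed
qed

lemma arc_gpath: "arc (gpath f a b)"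
  unfolding arc_def
proof
  have cf: "continuous_on {0..1} (\<lambda>s. f (a + (b-a)* s))"
  proof (rule continuous_on_compose2[OF good_cont[OF gf]])
    show "continuous_on {0..1} (\<lambda>s. a + (b-a)* s)" by (intro continuous_intros)
    show "(\<lambda>s. a + (b-a)* s) ` {0..1} \<subseteq> {-d..d}" using gparam' by blast
  qed
  show "path (gpath f a b)" unfolding path_def gpath_def
    by (intro continuous_on_Phi cf continuous_intros)
  show "inj_on (gpath f a b) {0..1}"
  proof (rule inj_onI)
    fix s t assume s: "s \<in> {0..1}" and t: "t \<in> {0..1}" and e: "gpath f a b s = gpath f a b t"
    have "\<bar>a + (b-a)* s\<bar> \<le> d" "\<bar>a + (b-a)*t\<bar> \<le> d" using gparam'[OF s] gparam'[OF t] by auto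
    then have "a + (b-a)* s = a + (b-a)*t" using e vv_Phi unfolding gpath_def by metis
    then show "s = t" using ab by simp
  qed
qed

lemma gpath_start: "pathstart (gpath f a b) = Phi a (f a)"
  by (simp add: pathstart_def gpath_def)
lemma gpath_finish: "pathfinish (gpath f a b) = Phi b (f b)"
  by (simp add: pathfinish_def gpath_def)

end

lemma between_in_S:
  assumes g1: "good f1" and g2: "good f2" and sc: "simply_connected S"
    and G1: "graph f1 \<subseteq> S" and G2: "graph f2 \<subseteq> S"
    and v: "v \<in> {-d..d}" and lt: "f1 v < h" "h < f2 v"
  shows "Phi v h \<in> S"
proof -
  have f12: "f1 v < f2 v" using lt by linarith
  obtain a b where abx: "-d \<le> a \<and> a < v \<and> v < b \<and> b \<le> d \<and> f1 a = f2 a \<and> f1 b = f2 b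
     \<and> (\<forall>w. a < w \<and> w < b \<longrightarrow> f1 w < f2 w)"
    using interval_lemma[OF g1 g2 v f12] by blast
  have ab: "-d \<le> a" "a < v" "v < b" "b \<le> d" "f1 a = f2 a" "f1 b = f2 b" using abx by auto
  have strict: "\<And>w. a < w \<Longrightarrow> w < b \<Longrightarrow> f1 w < f2 w" using abx by blast
  have ab': "-d \<le> a" "a < b" "b \<le> d" using ab by auto
  define \<gamma>1 where "\<gamma>1 = gpath f1 a b"
  define \<gamma>2 where "\<gamma>2 = reversepath (gpath f2 a b)"
  define \<gamma> where "\<gamma> = \<gamma>1 +++ \<gamma>2"
  define I1 where "I1 = (\<lambda>w. Phi w (f1 w)) ` {a..b}"
  define I2 where "I2 = (\<lambda>w. Phi w (f2 w)) ` {a..b}"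
  have pi1: "path_image \<gamma>1 = I1" unfolding \<gamma>1_def I1_def by (rule path_image_gpath[OF g1 ab'])
  have pi2: "path_image \<gamma>2 = I2" unfolding \<gamma>2_def I2_def path_image_reversepath by (rule path_image_gpath[OF g2 ab'])
  have a1: "arc \<gamma>1" unfolding \<gamma>1_def by (rule arc_gpath[OF g1 ab'])
  have a2: "arc \<gamma>2" unfolding \<gamma>2_def by (rule arc_reversepath[OF arc_gpath[OF g2 ab']])
  have s1: "pathstart \<gamma>1 = Phi a (f1 a)" "pathfinish \<gamma>1 = Phi b (f1 b)"
    unfolding \<gamma>1_def using gpath_start[OF g1 ab'] gpath_finish[OF g1 ab'] by auto
  have s2: "pathstart \<gamma>2 = Phi b (f2 b)" "pathfinish \<gamma>2 = Phi a (f2 a)"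
    unfolding \<gamma>2_def using gpath_start[OF g2 ab'] gpath_finish[OF g2 ab'] by auto
  have e12: "pathfinish \<gamma>1 = pathstart \<gamma>2" using s1 s2 ab by simp
  have e21: "pathfinish \<gamma>2 = pathstart \<gamma>1" using s1 s2 ab by simp
  have ab_d: "{a..b} \<subseteq> {-d..d}" using ab by auto
  have int: "path_image \<gamma>1 \<inter> path_image \<gamma>2 \<subseteq> {pathstart \<gamma>1, pathstart \<gamma>2}"
  proof
    fix q assume "q \<in> path_image \<gamma>1 \<inter> path_image \<gamma>2"
    then obtain w w' where w: "w \<in> {a..b}" "w' \<in> {a..b}" "q = Phi w (f1 w)" "q = Phi w' (f2 w')"
      unfolding pi1 pi2 I1_def I2_def by auto
    have wd: "w \<in> {-d..d}" "w' \<in> {-d..d}" using w(1,2) ab by auto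
    have "Phi w (f1 w) = Phi w' (f2 w')" using w(3,4) by simp
    then have "w = w' \<and> f1 w = f2 w" by (rule graph_eq[OF g1 g2 wd])
    then have "\<not> (a < w \<and> w < b)" using strict[of w] by auto
    then have "w = a \<or> w = b" using w(1) by auto
    then show "q \<in> {pathstart \<gamma>1, pathstart \<gamma>2}" using s1 s2 w ab by auto
  qed
  have sp: "simple_path \<gamma>" unfolding \<gamma>_def by (rule simple_path_join_loop[OF a1 a2 e12 e21 int])
  have cl: "pathfinish \<gamma> = pathstart \<gamma>" unfolding \<gamma>_def using e21 by simp
  have P: "path_image \<gamma> = I1 \<union> I2" unfolding \<gamma>_def using path_image_join[OF e12] pi1 pi2 by simp
  have "I1 \<subseteq> graph f1" "I2 \<subseteq> graph f2" unfolding I1_def I2_def graph_def using ab_d by (rule image_mono)+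
  then have PS: "path_image \<gamma> \<subseteq> S" unfolding P using G1 G2 by blast
  define Ob where "Ob = ball x d \<inter> ball y d"
  define F where "F = (\<lambda>q. (vv q, (hh q - f1 (vv q), f2 (vv q) - hh q)))"
  define B where "B = Ob \<inter> F -` ({a<..<b} \<times> ({0<..} \<times> {0<..}))"
  define B' where "B' = lens \<inter> F -` ({a..b} \<times> ({0..} \<times> {0..}))"
  have Olens: "Ob \<subseteq> lens" by (auto simp: Ob_def lens_def)
  have cF: "continuous_on lens F" unfolding F_def
    using continuous_on_hh cont_f_vv[of f1] cont_f_vv[of f2] continuous_on_vv g1 g2
    by (intro continuous_intros) (auto simp: good_def)
  have oB: "open B" unfolding B_def Ob_def
    by (intro continuous_open_preimage continuous_on_subset[OF cF] open_Int open_ball open_Times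
        open_greaterThanLessThan open_greaterThan) (auto simp: lens_def)
  have cB': "closed B'" unfolding B'_def
    by (intro continuous_closed_preimage cF compact_imp_closed[OF compact_lens] closed_Times
        closed_atLeastAtMost closed_atLeast)
  have BB': "B \<subseteq> B'" using Olens by (auto simp: B_def B'_def less_imp_le)
  have "B' \<subseteq> lens" unfolding B'_def by blast
  then have bB: "bounded B" using BB' compact_imp_bounded[OF compact_lens] bounded_subset by blast
  have vd: "\<bar>v\<bar> < d" using ab by auto
  have vd': "\<bar>v\<bar> \<le> d" using vd by simp
  have "\<bar>f1 v\<bar> \<le> d - \<bar>v\<bar>" "\<bar>f2 v\<bar> \<le> d - \<bar>v\<bar>" using good_bound[OF g1 v] good_bound[OF g2 v] by simp_all
  then have hb: "\<bar>h\<bar> \<le> d - \<bar>v\<bar>" using lt by linarith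
  have pl: "Phi v h \<in> lens" using in_lens_Phi[OF vd'] hb by simp
  have vvp: "vv (Phi v h) = v" and hhp: "hh (Phi v h) = h" using vv_Phi[OF vd'] hh_Phi[OF vd'] vd by auto
  have pO: "Phi v h \<in> Ob" unfolding Ob_def by (rule strict_in_O[OF g1 g2 pl]) (use vvp hhp lt in auto)
  have pB: "Phi v h \<in> B" using pO vvp hhp lt ab by (simp add: B_def F_def)
  have pn: "Phi v h \<notin> path_image \<gamma>"
  proof
    assume "Phi v h \<in> path_image \<gamma>"
    then obtain w where w: "w \<in> {a..b}" "Phi v h = Phi w (f1 w) \<or> Phi v h = Phi w (f2 w)"
      unfolding P I1_def I2_def by auto
    have wd: "\<bar>w\<bar> \<le> d" using w ab_d by auto
    have wdd: "w \<in> {-d..d}" using w(1) ab by auto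
    have o1: "\<bar>w\<bar> < d \<or> f1 w = 0" by (rule good_end0[OF g1 wdd])
    have o2: "\<bar>w\<bar> < d \<or> f2 w = 0" by (rule good_end0[OF g2 wdd])
    have vh: "\<bar>v\<bar> < d \<or> h = 0" using vd by simp
    show False using w(2)
    proof
      assume "Phi v h = Phi w (f1 w)"
      then have "v = w \<and> h = f1 w" by (rule Phi_eq_Phi[OF vd' wd vh o1])
      then show False using lt by auto
    next
      assume "Phi v h = Phi w (f2 w)"
      then have "v = w \<and> h = f2 w" by (rule Phi_eq_Phi[OF vd' wd vh o2])
      then show False using lt by auto
    qed
  qed
  have fr: "frontier B \<subseteq> path_image \<gamma>"
  proof
    fix q assume qf: "q \<in> frontier B"
    have "closure B \<subseteq> B'" using BB' cB' by (rule closure_minimal)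
    then have qB': "q \<in> B'" and qnB: "q \<notin> B" using qf oB by (auto simp: frontier_def interior_open)
    have ql: "q \<in> lens" and qv: "a \<le> vv q" "vv q \<le> b" and qh: "f1 (vv q) \<le> hh q" "hh q \<le> f2 (vv q)"
      using qB' by (auto simp: B'_def F_def)
    have qe: "q = Phi (vv q) (hh q)" using Phi_hh_lens[OF ql] by simp
    have vqab: "vv q \<in> {a..b}" using qv by auto
    show "q \<in> path_image \<gamma>"
    proof (cases "vv q = a \<or> vv q = b")
      case True
      then have "hh q = f1 (vv q)" using qh ab by auto
      then have "q = (\<lambda>w. Phi w (f1 w)) (vv q)" using qe by simp
      then have "q \<in> I1" unfolding I1_def using vqab by (rule image_eqI)
      then show ?thesis unfolding P by simp
    next
      case False
      then have st: "a < vv q" "vv q < b" using qv by auto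
      show ?thesis
      proof (cases "hh q = f1 (vv q) \<or> hh q = f2 (vv q)")
        case True
        then show ?thesis
        proof
          assume "hh q = f1 (vv q)"
          then have "q = (\<lambda>w. Phi w (f1 w)) (vv q)" using qe by simp
          then have "q \<in> I1" unfolding I1_def using vqab by (rule image_eqI)
          then show ?thesis unfolding P by simp
        next
          assume "hh q = f2 (vv q)"
          then have "q = (\<lambda>w. Phi w (f2 w)) (vv q)" using qe by simp
          then have "q \<in> I2" unfolding I2_def using vqab by (rule image_eqI)
          then show ?thesis unfolding P by simp
        qed
      next
        case False
        then have lt2: "f1 (vv q) < hh q" "hh q < f2 (vv q)" using qh by auto
        have "q \<in> Ob" unfolding Ob_def by (rule strict_in_O[OF g1 g2 ql lt2])
        then have "q \<in> B" using st lt2 by (simp add: B_def F_def)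
        then show ?thesis using qnB by simp
      qed
    qed
  qed
  show ?thesis by (rule inside_loop_in_S[OF sc sp cl PS bB fr pB pn])
qed

end

lemma min_lip_aux: "\<bar>a - c\<bar> \<le> (e::real) \<Longrightarrow> \<bar>b - d'\<bar> \<le> e \<Longrightarrow> \<bar>min a b - min c d'\<bar> \<le> e"
  by (simp add: min_def abs_le_iff)
lemma max_lip_aux: "\<bar>a - c\<bar> \<le> (e::real) \<Longrightarrow> \<bar>b - d'\<bar> \<le> e \<Longrightarrow> \<bar>max a b - max c d'\<bar> \<le> e"
  by (simp add: max_def abs_le_iff)

lemma escape:
  assumes "compact S" "connected K" "\<not> bounded K" "p \<in> K" "p \<in> S" "K \<inter> frontier S = {}"
  shows False
proof -
  have "K - S \<noteq> {}" using assms(1,3) compact_imp_bounded bounded_subset by blast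
  moreover have "K \<inter> S \<noteq> {}" using assms(4,5) by blast
  ultimately have "K \<inter> frontier S \<noteq> {}" using connected_Int_frontier[OF assms(2)] by blast
  then show False using assms(6) by simp
qed

context bip begin

lemma good_min: "good f \<Longrightarrow> good g \<Longrightarrow> good (\<lambda>v. min (f v) (g v))"
  unfolding good_def lip1_def by (auto intro: min_lip_aux)
lemma good_max: "good f \<Longrightarrow> good g \<Longrightarrow> good (\<lambda>v. max (f v) (g v))"
  unfolding good_def lip1_def by (auto intro: max_lip_aux)

lemma cb0_uu: assumes "cb p = 0" "\<bar>vv p\<bar> < d" shows "uu p = d"
proof -
  have "0 = ((uu p)^2 - d^2) * (d^2 - (vv p)^2)" using cb_sq[of p] assms(1) d_pos by simp
  moreover have "d^2 - (vv p)^2 > 0" using sq_less_d[OF assms(2)] by simp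
  ultimately have "(uu p)^2 = d^2" by simp
  then show "uu p = d" using uu_ge[of p] d_pos by (simp add: power2_eq_iff_nonneg)
qed

lemma Phi_hh_strip: "\<bar>vv p\<bar> < d \<Longrightarrow> Phi (vv p) (hh p) = p"
  using Phi_hh cb0_uu by blast

lemma Phi_ray: assumes "\<bar>vv p\<bar> = d" shows "Phi (vv p) (uu p - d) = p"
proof -
  have vd: "d^2 - (vv p)^2 = 0" using assms by (metis power2_abs diff_self)
  then have "(cb p)^2 = 0" using cb_sq[of p] by simp
  then have cb0: "cb p = 0" by simp
  have A: "((d + \<bar>uu p - d\<bar>) * vv p + d^2)/(2*d) = ca p"
    using uu_ge[of p] by (simp add: ca_formula)
  show ?thesis unfolding Phi_def vd using A cb0 pt_ca_cb[of p] by simp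
qed

lemma Phi0_seg: assumes "\<bar>v\<bar> \<le> d" shows "Phi v 0 \<in> closed_segment x y"
proof -
  define u where "u = (v + d)/(2*d)"
  have u01: "0 \<le> u" "u \<le> 1" using assms d_pos unfolding u_def by (auto simp: field_simps)
  have A: "((d + \<bar>0\<bar>) * v + d^2)/(2*d)/d = u" using d_pos by (simp add: u_def field_simps power2_eq_square)
  have "Phi v 0 = x + u *\<^sub>R (y - x)"
    unfolding Phi_def pt_def using A by simp
  also have "\<dots> = (1 - u) *\<^sub>R x + u *\<^sub>R y" by (simp add: algebra_simps)
  finally show ?thesis using u01 unfolding closed_segment_def by blast
qed

definition "ray v h0 \<sigma> = (\<lambda>t. Phi v (h0 + \<sigma> * t)) ` {0..}"

lemma ray_connected: "connected (ray v h0 \<sigma>)"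
  unfolding ray_def
  by (intro connected_continuous_image continuous_on_Phi continuous_intros convex_connected) (simp add: convex_real_interval)

lemma ray_start: "Phi v h0 \<in> ray v h0 \<sigma>"
  unfolding ray_def by (rule image_eqI[where x=0]) auto

lemma ray_unbounded: assumes v: "\<bar>v\<bar> \<le> d" and s: "\<bar>\<sigma>\<bar> = 1" shows "\<not> bounded (ray v h0 \<sigma>)"
proof
  assume "bounded (ray v h0 \<sigma>)"
  then obtain e where e: "\<forall>q\<in>ray v h0 \<sigma>. dist x q \<le> e" using bounded_any_center by blast
  define t where "t = 2 * \<bar>e\<bar> + 2 * \<bar>h0\<bar> + 2 * d + 2"
  have t0: "t \<ge> 0" using d_pos by (simp add: t_def)
  have q: "Phi v (h0 + \<sigma> * t) \<in> ray v h0 \<sigma>" unfolding ray_def using t0 by auto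
  define H where "H = h0 + \<sigma> * t"
  have "\<bar>\<sigma> * t\<bar> = t" using s t0 by (simp add: abs_mult)
  then have Hb: "\<bar>H\<bar> \<ge> t - \<bar>h0\<bar>" unfolding H_def by linarith
  have dH: "dist (Phi v H) x = (d + \<bar>H\<bar> + v)/2" by (rule Phi_comp(1)[OF v])
  have "-d \<le> v" using v by linarith
  then have "2*e < d + \<bar>H\<bar> + v" using Hb abs_ge_self[of e] abs_ge_zero[of h0] d_pos t_def by linarith
  then have "dist (Phi v H) x > e" unfolding dH by simp
  then have "dist (Phi v (h0 + \<sigma> * t)) x > e" by (simp add: H_def)
  then show False using e q by (auto simp: dist_commute)
qed

lemma ray_unb1: "\<bar>v\<bar> \<le> d \<Longrightarrow> \<not> bounded (ray v h0 1)"
  using ray_unbounded[of v 1 h0] by simp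
lemma ray_unb2: "\<bar>v\<bar> \<le> d \<Longrightarrow> \<not> bounded (ray v h0 (-1))"
  using ray_unbounded[of v "-1" h0] by simp

lemma notgraph: assumes "good f" "\<bar>w\<bar> < d" "h \<noteq> f w" shows "Phi w h \<notin> graph f"
proof
  assume "Phi w h \<in> graph f"
  then obtain w' where w': "w' \<in> {-d..d}" "Phi w h = Phi w' (f w')" by (auto simp: graph_def)
  have "w = w' \<and> h = f w'"
    by (rule Phi_eq_Phi) (use assms w' good_end0[OF assms(1) w'(1)] in auto)
  then show False using assms by simp
qed

lemma in_region_Phi: assumes gp: "goodpair L U" and w: "w \<in> {-d..d}" and h: "L w \<le> h" "h \<le> U w"
  shows "Phi w h \<in> region L U"
proof -
  have "(w, h) \<in> DD L U" using w h by (simp add: DD_def)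
  then show ?thesis unfolding region_image[OF gp] by (rule rev_image_eqI) simp
qed

lemma char:
  assumes ad: "adornment_sides S x y g1 g2" and sl1: "slender_side g1 x y" and sl2: "slender_side g2 x y"
  shows "\<exists>L U. goodpair L U \<and> S = region L U"
proof -
  have sg1: "sarc g1" and sg2: "sarc g2" using ad sl1 sl2 by (auto simp: sarc_def adornment_sides_def)
  define f1 where "f1 = hf g1"
  define f2 where "f2 = hf g2"
  have gf1: "good f1" and gf2: "good f2" unfolding f1_def f2_def using hf_good sg1 sg2 by auto
  have cS: "compact S" and scS: "simply_connected S" and segS: "closed_segment x y \<subseteq> S"
    and xf: "x \<in> frontier S" and yf: "y \<in> frontier S"
    using ad by (auto simp: adornment_sides_def)
  have C: "frontier S = graph f1 \<union> graph f2"
    using ad graph_hf[OF sg1] graph_hf[OF sg2] by (simp add: adornment_sides_def f1_def f2_def)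
  have frS: "frontier S \<subseteq> S" using frontier_subset_closed compact_imp_closed[OF cS] by blast
  have G1: "graph f1 \<subseteq> S" and G2: "graph f2 \<subseteq> S" using C frS by auto
  have Gl: "graph f1 \<subseteq> lens" "graph f2 \<subseteq> lens"
    using path_image_g_lens[OF sg1] path_image_g_lens[OF sg2] graph_hf[OF sg1] graph_hf[OF sg2]
    by (auto simp: f1_def f2_def)
  define L where "L v = min (f1 v) (f2 v)" for v
  define U where "U v = max (f1 v) (f2 v)" for v
  have gL: "good L" unfolding L_def[abs_def] by (rule good_min[OF gf1 gf2])
  have gU: "good U" unfolding U_def[abs_def] by (rule good_max[OF gf1 gf2])
  have notC: "Phi w h \<notin> frontier S" if "\<bar>w\<bar> < d" "h \<noteq> f1 w" "h \<noteq> f2 w" for w h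
    using notgraph[OF gf1 that(1,2)] notgraph[OF gf2 that(1,3)] C by blast
  have sign: "L v \<le> 0 \<and> 0 \<le> U v" if v: "v \<in> {-d..d}" for v
  proof (cases "\<bar>v\<bar> < d")
    case False
    then have "\<bar>v\<bar> = d" using v by auto
    then have "f1 v = 0" "f2 v = 0" using good_bound[OF gf1 v] good_bound[OF gf2 v] by auto
    then show ?thesis by (simp add: L_def U_def)
  next
    case True
    have vd: "\<bar>v\<bar> \<le> d" using True by simp
    have p0: "Phi v 0 \<in> S" using Phi0_seg[OF vd] segS by blast
    have "0 \<le> U v"
    proof (rule ccontr)
      assume "\<not> 0 \<le> U v"
      then have n: "f1 v < 0" "f2 v < 0" by (auto simp: U_def)
      have "ray v 0 1 \<inter> frontier S = {}"
      proof -
        { fix q assume "q \<in> ray v 0 1"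
          then obtain t where t: "t \<ge> 0" "q = Phi v (0 + 1 * t)" by (auto simp: ray_def)
          have "q \<notin> frontier S" unfolding t(2) by (rule notC) (use True t n in auto) }
        then show ?thesis by blast
      qed
      then show False
        using escape[OF cS ray_connected ray_unb1[OF vd] ray_start[of v 0 1] p0] by simp
    qed
    moreover have "L v \<le> 0"
    proof (rule ccontr)
      assume "\<not> L v \<le> 0"
      then have n: "f1 v > 0" "f2 v > 0" by (auto simp: L_def)
      have "ray v 0 (-1) \<inter> frontier S = {}"
      proof -
        { fix q assume "q \<in> ray v 0 (-1)"
          then obtain t where t: "t \<ge> 0" "q = Phi v (0 + (-1) * t)" by (auto simp: ray_def)
          have "q \<notin> frontier S" unfolding t(2) by (rule notC) (use True t n in auto) }
        then show ?thesis by blast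
      qed
      then show False
        using escape[OF cS ray_connected ray_unb2[OF vd] ray_start[of v 0 "-1"] p0] by simp
    qed
    ultimately show ?thesis by simp
  qed
  have gp: "goodpair L U" using gL gU sign by (simp add: goodpair_def)
  have sub1: "S \<subseteq> region L U"
  proof
    fix p assume pS: "p \<in> S"
    show "p \<in> region L U"
    proof (cases "p \<in> frontier S")
      case True
      then obtain w where w: "w \<in> {-d..d}" "p = Phi w (f1 w) \<or> p = Phi w (f2 w)"
        unfolding C graph_def by auto
      have "L w \<le> f1 w" "f1 w \<le> U w" "L w \<le> f2 w" "f2 w \<le> U w" by (auto simp: L_def U_def)
      then show ?thesis using w in_region_Phi[OF gp w(1)] by auto
    next
      case nf: False
      define v where "v = vv p"
      have vi: "v \<in> {-d..d}" using vv_in by (simp add: v_def)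
      show ?thesis
      proof (cases "\<bar>v\<bar> < d")
        case True
        have vd: "\<bar>v\<bar> \<le> d" using True by simp
        have pe: "Phi v (hh p) = p" using Phi_hh_strip True by (simp add: v_def)
        have "hh p \<le> U v"
        proof (rule ccontr)
          assume "\<not> hh p \<le> U v"
          then have n: "f1 v < hh p" "f2 v < hh p" by (auto simp: U_def)
          have "ray v (hh p) 1 \<inter> frontier S = {}"
          proof -
            { fix q assume "q \<in> ray v (hh p) 1"
              then obtain t where t: "t \<ge> 0" "q = Phi v (hh p + 1 * t)" by (auto simp: ray_def)
              have "q \<notin> frontier S" unfolding t(2) by (rule notC) (use True t n in auto) }
            then show ?thesis by blast
          qed
          then show False
            using escape[OF cS ray_connected ray_unb1[OF vd] ray_start[of v "hh p" 1]] pe pS by simp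
        qed
        moreover have "L v \<le> hh p"
        proof (rule ccontr)
          assume "\<not> L v \<le> hh p"
          then have n: "hh p < f1 v" "hh p < f2 v" by (auto simp: L_def)
          have "ray v (hh p) (-1) \<inter> frontier S = {}"
          proof -
            { fix q assume "q \<in> ray v (hh p) (-1)"
              then obtain t where t: "t \<ge> 0" "q = Phi v (hh p + (-1) * t)" by (auto simp: ray_def)
              have "q \<notin> frontier S" unfolding t(2) by (rule notC) (use True t n in auto) }
            then show ?thesis by blast
          qed
          then show False
            using escape[OF cS ray_connected ray_unb2[OF vd] ray_start[of v "hh p" "-1"]] pe pS by simp
        qed
        ultimately show ?thesis using in_region_Phi[OF gp vi] pe by metis
      next
        case False
        then have vd: "\<bar>v\<bar> = d" using vi by auto
        have pe: "Phi v (uu p - d) = p" using Phi_ray vd by (simp add: v_def)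
        have "p \<noteq> x" "p \<noteq> y" using nf xf yf by auto
        then have up: "uu p > d"
        proof -
          have "uu p \<noteq> d"
          proof
            assume u: "uu p = d"
            have "v = -d \<or> v = d" using vd by auto
            then show False
            proof
              assume "v = -d"
              then have "dist p x = 0" using u unfolding v_def vv_def uu_def by linarith
              then show False using \<open>p \<noteq> x\<close> by simp
            next
              assume "v = d"
              then have "dist p y = 0" using u unfolding v_def vv_def uu_def by linarith
              then show False using \<open>p \<noteq> y\<close> by simp
            qed
          qed
          then show ?thesis using uu_ge[of p] by simp
        qed
        have "ray v (uu p - d) 1 \<inter> frontier S = {}"
        proof -
          { fix q assume "q \<in> ray v (uu p - d) 1"
            then obtain t where t: "t \<ge> 0" "q = Phi v (uu p - d + 1 * t)" by (auto simp: ray_def)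
            have "q \<notin> lens" unfolding t(2) using in_lens_Phi[of v] vd up t(1) by simp
            then have "q \<notin> frontier S" unfolding C using Gl by blast }
          then show ?thesis by blast
        qed
        then show ?thesis
          using escape[OF cS ray_connected ray_unb1[of v "uu p - d"] ray_start[of v "uu p - d" 1]] vd pe pS by simp
      qed
    qed
  qed
  have sub2: "region L U \<subseteq> S"
  proof
    fix p assume pr: "p \<in> region L U"
    define v where "v = vv p"
    define h where "h = hh p"
    have vi: "v \<in> {-d..d}" using vv_in by (simp add: v_def)
    have pe: "p = Phi v h" using Phi_hh_lens pr by (simp add: region_def v_def h_def)
    have bnd: "L v \<le> h" "h \<le> U v" using pr by (simp_all add: region_def v_def h_def)
    show "p \<in> S"
    proof (cases "h = f1 v \<or> h = f2 v")
      case True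
      then have "p \<in> graph f1 \<or> p \<in> graph f2" unfolding graph_def using pe vi by blast
      then show ?thesis using G1 G2 by blast
    next
      case False
      show ?thesis
      proof (cases "f1 v < f2 v")
        case True
        then have "f1 v < h" "h < f2 v" using bnd False by (auto simp: L_def U_def)
        then show ?thesis using between_in_S[OF gf1 gf2 scS G1 G2 vi] pe by simp
      next
        case nt: False
        then have "f2 v < h" "h < f1 v" using bnd False by (auto simp: L_def U_def)
        then show ?thesis using between_in_S[OF gf2 gf1 scS G2 G1 vi] pe by simp
      qed
    qed
  qed
  show ?thesis using gp sub1 sub2 by blast
qed

end

context bip begin

lemma good_abs_d: "good f \<Longrightarrow> v \<in> {-d..d} \<Longrightarrow> \<bar>f v\<bar> \<le> d"
  using good_bound[of f v] by auto

lemma bdd_fam: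
  assumes "\<forall>i\<in>F. good (f i)" "v \<in> {-d..d}"
  shows "bdd_above ((\<lambda>i. f i v) ` F)" "bdd_below ((\<lambda>i. f i v) ` F)"
proof -
  have "\<forall>i\<in>F. \<bar>f i v\<bar> \<le> d" using assms good_abs_d by blast
  then show "bdd_above ((\<lambda>i. f i v) ` F)" "bdd_below ((\<lambda>i. f i v) ` F)"
    by (auto intro!: bdd_aboveI[of _ d] bdd_belowI[of _ "-d"] simp: abs_le_iff)
qed

lemma good_SUP:
  assumes ne: "F \<noteq> {}" and g: "\<forall>i\<in>F. good (f i)"
  shows "good (\<lambda>v. SUP i\<in>F. f i v)"
proof -
  have le: "(SUP i\<in>F. f i v) \<le> (SUP i\<in>F. f i w) + \<bar>v - w\<bar>"
    if v: "v \<in> {-d..d}" and w: "w \<in> {-d..d}" for v w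
  proof (rule cSUP_least[OF ne])
    fix i assume i: "i \<in> F"
    have "\<bar>f i v - f i w\<bar> \<le> \<bar>v - w\<bar>" using g i v w by (auto simp: good_def lip1_def)
    moreover have "f i w \<le> (SUP i\<in>F. f i w)" by (rule cSUP_upper[OF i bdd_fam(1)[OF g w]])
    ultimately show "f i v \<le> (SUP i\<in>F. f i w) + \<bar>v - w\<bar>" by linarith
  qed
  have "lip1 (\<lambda>v. SUP i\<in>F. f i v)" unfolding lip1_def
  proof (intro ballI)
    fix v w assume v: "v \<in> {-d..d}" and w: "w \<in> {-d..d}"
    show "\<bar>(SUP i\<in>F. f i v) - (SUP i\<in>F. f i w)\<bar> \<le> \<bar>v - w\<bar>"
      using le[OF v w] le[OF w v] by (simp add: abs_minus_commute abs_le_iff)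
  qed
  moreover have "(SUP i\<in>F. f i (-d)) = 0" "(SUP i\<in>F. f i d) = 0"
    using g ne by (simp_all add: good_def)
  ultimately show ?thesis by (simp add: good_def)
qed

lemma good_INF:
  assumes ne: "F \<noteq> {}" and g: "\<forall>i\<in>F. good (f i)"
  shows "good (\<lambda>v. INF i\<in>F. f i v)"
proof -
  have le: "(INF i\<in>F. f i w) - \<bar>v - w\<bar> \<le> (INF i\<in>F. f i v)"
    if v: "v \<in> {-d..d}" and w: "w \<in> {-d..d}" for v w
  proof (rule cINF_greatest[OF ne])
    fix i assume i: "i \<in> F"
    have "\<bar>f i v - f i w\<bar> \<le> \<bar>v - w\<bar>" using g i v w by (auto simp: good_def lip1_def)
    moreover have "(INF i\<in>F. f i w) \<le> f i w" by (rule cINF_lower[OF bdd_fam(2)[OF g w] i])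
    ultimately show "(INF i\<in>F. f i w) - \<bar>v - w\<bar> \<le> f i v" by linarith
  qed
  have "lip1 (\<lambda>v. INF i\<in>F. f i v)" unfolding lip1_def
  proof (intro ballI)
    fix v w assume v: "v \<in> {-d..d}" and w: "w \<in> {-d..d}"
    show "\<bar>(INF i\<in>F. f i v) - (INF i\<in>F. f i w)\<bar> \<le> \<bar>v - w\<bar>"
      using le[OF v w] le[OF w v] by (simp add: abs_minus_commute abs_le_iff)
  qed
  moreover have "(INF i\<in>F. f i (-d)) = 0" "(INF i\<in>F. f i d) = 0"
    using g ne by (simp_all add: good_def)
  ultimately show ?thesis by (simp add: good_def)
qed

lemma fam_goods:
  assumes "\<forall>i\<in>F. goodpair (Lf i) (Uf i)"
  shows "\<forall>i\<in>F. good (Lf i)" "\<forall>i\<in>F. good (Uf i)"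
  using assms by (auto simp: goodpair_def)

lemma union_region:
  assumes fin: "finite F" and ne: "F \<noteq> {}" and gp: "\<forall>i\<in>F. goodpair (Lf i) (Uf i)"
  shows "goodpair (\<lambda>v. INF i\<in>F. Lf i v) (\<lambda>v. SUP i\<in>F. Uf i v)"
    "(\<Union>i\<in>F. region (Lf i) (Uf i)) = region (\<lambda>v. INF i\<in>F. Lf i v) (\<lambda>v. SUP i\<in>F. Uf i v)"
proof -
  note gL = fam_goods(1)[OF gp] and gU = fam_goods(2)[OF gp]
  obtain i0 where i0: "i0 \<in> F" using ne by blast
  have sgn: "\<forall>v\<in>{-d..d}. (INF i\<in>F. Lf i v) \<le> 0 \<and> 0 \<le> (SUP i\<in>F. Uf i v)"
  proof
    fix v assume v: "v \<in> {-d..d}"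
    have "Lf i0 v \<le> 0" "0 \<le> Uf i0 v" using gp i0 v by (auto simp: goodpair_def)
    moreover have "(INF i\<in>F. Lf i v) \<le> Lf i0 v" by (rule cINF_lower[OF bdd_fam(2)[OF gL v] i0])
    moreover have "Uf i0 v \<le> (SUP i\<in>F. Uf i v)" by (rule cSUP_upper[OF i0 bdd_fam(1)[OF gU v]])
    ultimately show "(INF i\<in>F. Lf i v) \<le> 0 \<and> 0 \<le> (SUP i\<in>F. Uf i v)" by linarith
  qed
  show "goodpair (\<lambda>v. INF i\<in>F. Lf i v) (\<lambda>v. SUP i\<in>F. Uf i v)"
    unfolding goodpair_def using good_INF[OF ne gL] good_SUP[OF ne gU] sgn by blast
  show "(\<Union>i\<in>F. region (Lf i) (Uf i)) = region (\<lambda>v. INF i\<in>F. Lf i v) (\<lambda>v. SUP i\<in>F. Uf i v)"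
  proof
    show "(\<Union>i\<in>F. region (Lf i) (Uf i)) \<subseteq> region (\<lambda>v. INF i\<in>F. Lf i v) (\<lambda>v. SUP i\<in>F. Uf i v)"
    proof
      fix p assume "p \<in> (\<Union>i\<in>F. region (Lf i) (Uf i))"
      then obtain i where i: "i \<in> F" and p: "p \<in> region (Lf i) (Uf i)" by blast
      have v: "vv p \<in> {-d..d}" by (rule vv_in)
      have "(INF i\<in>F. Lf i (vv p)) \<le> Lf i (vv p)" by (rule cINF_lower[OF bdd_fam(2)[OF gL v] i])
      moreover have "Uf i (vv p) \<le> (SUP i\<in>F. Uf i (vv p))" by (rule cSUP_upper[OF i bdd_fam(1)[OF gU v]])
      ultimately show "p \<in> region (\<lambda>v. INF i\<in>F. Lf i v) (\<lambda>v. SUP i\<in>F. Uf i v)"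
        using p by (auto simp: region_def)
    qed
    show "region (\<lambda>v. INF i\<in>F. Lf i v) (\<lambda>v. SUP i\<in>F. Uf i v) \<subseteq> (\<Union>i\<in>F. region (Lf i) (Uf i))"
    proof
      fix p assume p: "p \<in> region (\<lambda>v. INF i\<in>F. Lf i v) (\<lambda>v. SUP i\<in>F. Uf i v)"
      define v where "v = vv p"
      have v: "v \<in> {-d..d}" unfolding v_def by (rule vv_in)
      have pl: "p \<in> lens" and b: "(INF i\<in>F. Lf i v) \<le> hh p" "hh p \<le> (SUP i\<in>F. Uf i v)"
        using p by (auto simp: region_def v_def)
      have fimg: "finite ((\<lambda>i. Uf i v) ` F)" "finite ((\<lambda>i. Lf i v) ` F)" using fin by auto
      have neimg: "(\<lambda>i. Uf i v) ` F \<noteq> {}" "(\<lambda>i. Lf i v) ` F \<noteq> {}" using ne by auto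
      show "p \<in> (\<Union>i\<in>F. region (Lf i) (Uf i))"
      proof (cases "hh p \<ge> 0")
        case True
        have "(SUP i\<in>F. Uf i v) \<in> (\<lambda>i. Uf i v) ` F"
          using cSup_eq_Max[OF fimg(1) neimg(1)] Max_in[OF fimg(1) neimg(1)] by simp
        then obtain j where j: "j \<in> F" "(SUP i\<in>F. Uf i v) = Uf j v" by auto
        have "Lf j v \<le> 0" using gp j v by (auto simp: goodpair_def)
        then have "p \<in> region (Lf j) (Uf j)" using pl b j True by (auto simp: region_def v_def)
        then show ?thesis using j by blast
      next
        case False
        have "(INF i\<in>F. Lf i v) \<in> (\<lambda>i. Lf i v) ` F"
          using cInf_eq_Min[OF fimg(2) neimg(2)] Min_in[OF fimg(2) neimg(2)] by simp
        then obtain j where j: "j \<in> F" "(INF i\<in>F. Lf i v) = Lf j v" by auto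
        have "0 \<le> Uf j v" using gp j v by (auto simp: goodpair_def)
        then have "p \<in> region (Lf j) (Uf j)" using pl b j False by (auto simp: region_def v_def)
        then show ?thesis using j by blast
      qed
    qed
  qed
qed

lemma inter_region:
  assumes ne: "F \<noteq> {}" and gp: "\<forall>i\<in>F. goodpair (Lf i) (Uf i)"
  shows "goodpair (\<lambda>v. SUP i\<in>F. Lf i v) (\<lambda>v. INF i\<in>F. Uf i v)"
    "(\<Inter>i\<in>F. region (Lf i) (Uf i)) = region (\<lambda>v. SUP i\<in>F. Lf i v) (\<lambda>v. INF i\<in>F. Uf i v)"
proof -
  note gL = fam_goods(1)[OF gp] and gU = fam_goods(2)[OF gp]
  have sgn: "\<forall>v\<in>{-d..d}. (SUP i\<in>F. Lf i v) \<le> 0 \<and> 0 \<le> (INF i\<in>F. Uf i v)"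
  proof
    fix v assume v: "v \<in> {-d..d}"
    have "(SUP i\<in>F. Lf i v) \<le> 0" by (rule cSUP_least[OF ne]) (use gp v in \<open>auto simp: goodpair_def\<close>)
    moreover have "0 \<le> (INF i\<in>F. Uf i v)" by (rule cINF_greatest[OF ne]) (use gp v in \<open>auto simp: goodpair_def\<close>)
    ultimately show "(SUP i\<in>F. Lf i v) \<le> 0 \<and> 0 \<le> (INF i\<in>F. Uf i v)" by simp
  qed
  show "goodpair (\<lambda>v. SUP i\<in>F. Lf i v) (\<lambda>v. INF i\<in>F. Uf i v)"
    unfolding goodpair_def using good_SUP[OF ne gL] good_INF[OF ne gU] sgn by blast
  show "(\<Inter>i\<in>F. region (Lf i) (Uf i)) = region (\<lambda>v. SUP i\<in>F. Lf i v) (\<lambda>v. INF i\<in>F. Uf i v)"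
  proof
    show "(\<Inter>i\<in>F. region (Lf i) (Uf i)) \<subseteq> region (\<lambda>v. SUP i\<in>F. Lf i v) (\<lambda>v. INF i\<in>F. Uf i v)"
    proof
      fix p assume p: "p \<in> (\<Inter>i\<in>F. region (Lf i) (Uf i))"
      have v: "vv p \<in> {-d..d}" by (rule vv_in)
      obtain i0 where i0: "i0 \<in> F" using ne by blast
      have pl: "p \<in> lens" using p i0 by (auto simp: region_def)
      have "(SUP i\<in>F. Lf i (vv p)) \<le> hh p" by (rule cSUP_least[OF ne]) (use p in \<open>auto simp: region_def\<close>)
      moreover have "hh p \<le> (INF i\<in>F. Uf i (vv p))" by (rule cINF_greatest[OF ne]) (use p in \<open>auto simp: region_def\<close>)
      ultimately show "p \<in> region (\<lambda>v. SUP i\<in>F. Lf i v) (\<lambda>v. INF i\<in>F. Uf i v)"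
        using pl by (simp add: region_def)
    qed
    show "region (\<lambda>v. SUP i\<in>F. Lf i v) (\<lambda>v. INF i\<in>F. Uf i v) \<subseteq> (\<Inter>i\<in>F. region (Lf i) (Uf i))"
    proof
      fix p assume p: "p \<in> region (\<lambda>v. SUP i\<in>F. Lf i v) (\<lambda>v. INF i\<in>F. Uf i v)"
      have v: "vv p \<in> {-d..d}" by (rule vv_in)
      have pl: "p \<in> lens" and b: "(SUP i\<in>F. Lf i (vv p)) \<le> hh p" "hh p \<le> (INF i\<in>F. Uf i (vv p))"
        using p by (auto simp: region_def)
      show "p \<in> (\<Inter>i\<in>F. region (Lf i) (Uf i))"
      proof
        fix i assume i: "i \<in> F"
        have "Lf i (vv p) \<le> (SUP i\<in>F. Lf i (vv p))" by (rule cSUP_upper[OF i bdd_fam(1)[OF gL v]])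
        moreover have "(INF i\<in>F. Uf i (vv p)) \<le> Uf i (vv p)" by (rule cINF_lower[OF bdd_fam(2)[OF gU v] i])
        ultimately show "p \<in> region (Lf i) (Uf i)" using pl b by (simp add: region_def)
      qed
    qed
  qed
qed

end

lemma slender_xy: "slender_adornment S x y \<Longrightarrow> x \<noteq> y"
  by (auto simp: slender_adornment_def adornment_sides_def)

lemma family_choice:
  assumes ne: "F \<noteq> {}" and sl: "\<forall>S\<in>F. slender_adornment S x y"
  shows "\<exists>Lf Uf. (\<forall>S\<in>F. bip.goodpair x y (Lf S) (Uf S) \<and> S = bip.region x y (Lf S) (Uf S))"
proof -
  obtain S0 where "S0 \<in> F" using ne by blast
  then have xy: "x \<noteq> y" using sl slender_xy by blast
  interpret B: bip x y by unfold_locales (rule xy)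
  have "\<forall>S\<in>F. \<exists>LU. B.goodpair (fst LU) (snd LU) \<and> S = B.region (fst LU) (snd LU)"
  proof
    fix S assume "S \<in> F"
    then obtain g1 g2 where "adornment_sides S x y g1 g2" "slender_side g1 x y" "slender_side g2 x y"
      using sl by (auto simp: slender_adornment_def)
    then obtain L U where "B.goodpair L U" "S = B.region L U" using B.char by blast
    then show "\<exists>LU. B.goodpair (fst LU) (snd LU) \<and> S = B.region (fst LU) (snd LU)"
      by (intro exI[where x="(L,U)"]) simp
  qed
  then obtain ch where ch: "\<forall>S\<in>F. B.goodpair (fst (ch S)) (snd (ch S)) \<and> S = B.region (fst (ch S)) (snd (ch S))"
    by (metis (no_types, lifting) bchoice)
  show ?thesis by (rule exI[where x="\<lambda>S. fst (ch S)"], rule exI[where x="\<lambda>S. snd (ch S)"]) (use ch in simp)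
qed

theorem mainTheorem4:
  fixes x y :: "real^2"
  shows "(\<forall>F. finite F \<and> F \<noteq> {} \<and> (\<forall>S\<in>F. slender_adornment S x y)
            \<longrightarrow> slender_adornment (\<Union>F) x y)
       \<and> (\<forall>F. F \<noteq> {} \<and> (\<forall>S\<in>F. slender_adornment S x y)
            \<longrightarrow> slender_adornment (\<Inter>F) x y)"
proof (intro conjI allI impI)
  fix F :: "(real^2) set set"
  assume a: "finite F \<and> F \<noteq> {} \<and> (\<forall>S\<in>F. slender_adornment S x y)"
  then have ne: "F \<noteq> {}" and sl: "\<forall>S\<in>F. slender_adornment S x y" and fin: "finite F" by auto
  obtain S0 where "S0 \<in> F" using ne by blast
  then have xy: "x \<noteq> y" using sl slender_xy by blast
  interpret B: bip x y by unfold_locales (rule xy)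
  obtain Lf Uf where ch: "\<forall>S\<in>F. B.goodpair (Lf S) (Uf S) \<and> S = B.region (Lf S) (Uf S)"
    using family_choice[OF ne sl] by blast
  have gp: "\<forall>S\<in>F. B.goodpair (Lf S) (Uf S)" using ch by blast
  have "\<Union>F = (\<Union>S\<in>F. B.region (Lf S) (Uf S))"
  proof -
    have "\<Union>F = (\<Union>S\<in>F. S)" by simp
    also have "\<dots> = (\<Union>S\<in>F. B.region (Lf S) (Uf S))" by (rule SUP_cong) (use ch in auto)
    finally show ?thesis .
  qed
  also have "\<dots> = B.region (\<lambda>v. INF i\<in>F. Lf i v) (\<lambda>v. SUP i\<in>F. Uf i v)"
    by (rule B.union_region(2)[OF fin ne gp])
  finally show "slender_adornment (\<Union>F) x y"
    using B.construct[OF B.union_region(1)[OF fin ne gp]] by simp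
next
  fix F :: "(real^2) set set"
  assume a: "F \<noteq> {} \<and> (\<forall>S\<in>F. slender_adornment S x y)"
  then have ne: "F \<noteq> {}" and sl: "\<forall>S\<in>F. slender_adornment S x y" by auto
  obtain S0 where "S0 \<in> F" using ne by blast
  then have xy: "x \<noteq> y" using sl slender_xy by blast
  interpret B: bip x y by unfold_locales (rule xy)
  obtain Lf Uf where ch: "\<forall>S\<in>F. B.goodpair (Lf S) (Uf S) \<and> S = B.region (Lf S) (Uf S)"
    using family_choice[OF ne sl] by blast
  have gp: "\<forall>S\<in>F. B.goodpair (Lf S) (Uf S)" using ch by blast
  have "\<Inter>F = (\<Inter>S\<in>F. B.region (Lf S) (Uf S))"
  proof -
    have "\<Inter>F = (\<Inter>S\<in>F. S)" by simp
    also have "\<dots> = (\<Inter>S\<in>F. B.region (Lf S) (Uf S))" by (rule INF_cong) (use ch in auto)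
    finally show ?thesis .
  qed
  also have "\<dots> = B.region (\<lambda>v. SUP i\<in>F. Lf i v) (\<lambda>v. INF i\<in>F. Uf i v)"
    by (rule B.inter_region(2)[OF ne gp])
  finally show "slender_adornment (\<Inter>F) x y"
    using B.construct[OF B.inter_region(1)[OF ne gp]] by simp
qed

end
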